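(* Let $S$ be an inverse semigroup (with zero), let $\beta\colon S\to\mathsf{B}(S)$ be its Booleanization, let $I$ be the Cuntz-Krieger ideal of $\mathsf{B}(S)$, let $\mathsf{T}(S)=\mathsf{B}(S)/\varepsilon_I$ be the Exel completion of $S$, and let $\tau=\nu\circ\beta\colon S\to\mathsf{T}(S)$, where $\nu\colon\mathsf{B}(S)\to\mathsf{T}(S)$ is the natural quotient morphism. Then $\tau$ is a cover-to-join map, and it is universal among cover-to-join maps from $S$ to Boolean inverse semigroups: for every cover-to-join map $\theta\colon S\to T$ into a Boolean inverse semigroup $T$ there is a unique morphism of Boolean inverse semigroups $\theta'\colon\mathsf{T}(S)\to T$ such that $\theta'\circ\tau=\theta$.
   Context: All inverse semigroups have a zero and all homomorphisms preserve the zero; no identity element is assumed. For $s$ in an inverse semigroup, $\mathbf{d}(s)=s^{-1}s$, $\mathbf{r}(s)=ss^{-1}$; the natural partial order is $s\le t$ iff $s=t\,s^{-1}s$; $a^{\downarrow}=\{s: s\le a\}$. Elements $s,t$ are compatible ($s\sim t$) if $s^{-1}t$ and $st^{-1}$ are idempotents. An inverse semigroup is distributive if every compatible pair has a join and multiplication distributes over such joins; it is Boolean if moreover its semilattice of idempotents is a generalized Boolean algebra (a distributive lattice with bottom in which every principal order ideal is a unital Boolean algebra). In a Boolean inverse semigroup, if $b\le a$ then $a\setminus b$ denotes $a(\mathbf{d}(a)\setminus\mathbf{d}(b))$. A morphism of Boolean inverse semigroups is a zero-preserving homomorphism that preserves joins of compatible pairs. An additive ideal of a Boolean inverse semigroup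 is a semigroup ideal closed under joins of compatible pairs; for an additive ideal $I$ of $B$, $\varepsilon_I$ is the relation $(a,b)\in\varepsilon_I$ iff there is $c\le a,b$ with $a\setminus c,\ b\setminus c\in I$; it is a congruence and $B/\varepsilon_I$ is a Boolean inverse semigroup. A finite subset $\{a_1,\dots,a_m\}\subseteq a^{\downarrow}$ is a cover of $a$ if for every $0\ne x\le a$ there is $i$ with $x\wedge a_i\ne 0$ (elements of a principal order ideal are pairwise compatible and so have meets). A cover-to-join map is a homomorphism $\theta\colon S\to T$ into a Boolean inverse semigroup $T$ such that whenever $\{a_1,\dots,a_m\}$ is a cover of $a$, we have $\theta(a)=\theta(a_1)\vee\dots\vee\theta(a_m)$. The Booleanization of $S$ is a Boolean inverse semigroup $\mathsf{B}(S)$ with an injective homomorphism $\beta\colon S\to\mathsf{B}(S)$ such that for every homomorphism $\theta\colon S\to T$ into a Boolean inverse semigroup there is a unique morphism $\theta'\colon\mathsf{B}(S)\to T$ with $\theta'\beta=\theta$. The Cuntz-Krieger ideal $I$ of $\mathsf{B}(S)$ is the smallest additive ideal containing all elements $\beta(a)\setminus(\beta(a_1)\vee\dots\vee\beta(a_m))$ where $\{a_1,\dots,a_m\}$ is a cover of $a$ in $S$. *)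

theory Defs
  imports Main
begin

record 'a isg =
  car :: "'a set"
  mul :: "'a \<Rightarrow> 'a \<Rightarrow> 'a"
  zer :: 'a

definition inverse_semigroup :: "'a isg \<Rightarrow> bool" where
  "inverse_semigroup S \<longleftrightarrow>
     zer S \<in> car S
   \<and> (\<forall>a\<in>car S. \<forall>b\<in>car S. mul S a b \<in> car S)
   \<and> (\<forall>a\<in>car S. \<forall>b\<in>car S. \<forall>c\<in>car S. mul S (mul S a b) c = mul S a (mul S b c))
   \<and> (\<forall>a\<in>car S. mul S (zer S) a = zer S \<and> mul S a (zer S) = zer S)
   \<and> (\<forall>a\<in>car S. \<exists>!b. b \<in> car S \<and> mul S (mul S a b) a = a \<and> mul S (mul S b a) b = b)"

definition inv :: "'a isg \<Rightarrow> 'a \<Rightarrow> 'a" where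
  "inv S a = (THE b. b \<in> car S \<and> mul S (mul S a b) a = a \<and> mul S (mul S b a) b = b)"

definition dom :: "'a isg \<Rightarrow> 'a \<Rightarrow> 'a" where
  "dom S a = mul S (inv S a) a"

definition ran :: "'a isg \<Rightarrow> 'a \<Rightarrow> 'a" where
  "ran S a = mul S a (inv S a)"

definition idem :: "'a isg \<Rightarrow> 'a \<Rightarrow> bool" where
  "idem S e \<longleftrightarrow> e \<in> car S \<and> mul S e e = e"

definition Idem :: "'a isg \<Rightarrow> 'a set" where
  "Idem S = {e. idem S e}"

definition leq :: "'a isg \<Rightarrow> 'a \<Rightarrow> 'a \<Rightarrow> bool" where
  "leq S s t \<longleftrightarrow> s \<in> car S \<and> t \<in> car S \<and> s = mul S t (dom S s)"

definition down :: "'a isg \<Rightarrow> 'a \<Rightarrow> 'a set" where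
  "down S a = {s \<in> car S. leq S s a}"

definition compat :: "'a isg \<Rightarrow> 'a \<Rightarrow> 'a \<Rightarrow> bool" where
  "compat S s t \<longleftrightarrow> s \<in> car S \<and> t \<in> car S
     \<and> idem S (mul S (inv S s) t) \<and> idem S (mul S s (inv S t))"

definition is_lub_in :: "'a isg \<Rightarrow> 'a set \<Rightarrow> 'a set \<Rightarrow> 'a \<Rightarrow> bool" where
  "is_lub_in S X A x \<longleftrightarrow> x \<in> X \<and> (\<forall>a\<in>A. leq S a x)
     \<and> (\<forall>y\<in>X. (\<forall>a\<in>A. leq S a y) \<longrightarrow> leq S x y)"

definition is_glb_in :: "'a isg \<Rightarrow> 'a set \<Rightarrow> 'a set \<Rightarrow> 'a \<Rightarrow> bool" where
  "is_glb_in S X A x \<longleftrightarrow> x \<in> X \<and> (\<forall>a\<in>A. leq S x a)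
     \<and> (\<forall>y\<in>X. (\<forall>a\<in>A. leq S y a) \<longrightarrow> leq S y x)"

definition join_set :: "'a isg \<Rightarrow> 'a set \<Rightarrow> 'a" where
  "join_set S A = (THE x. is_lub_in S (car S) A x)"

definition join :: "'a isg \<Rightarrow> 'a \<Rightarrow> 'a \<Rightarrow> 'a" where
  "join S a b = join_set S {a, b}"

definition meet :: "'a isg \<Rightarrow> 'a \<Rightarrow> 'a \<Rightarrow> 'a" where
  "meet S a b = (THE x. is_glb_in S (car S) {a, b} x)"

definition Ejoin :: "'a isg \<Rightarrow> 'a \<Rightarrow> 'a \<Rightarrow> 'a" where
  "Ejoin S e f = (THE x. is_lub_in S (Idem S) {e, f} x)"

definition Emeet :: "'a isg \<Rightarrow> 'a \<Rightarrow> 'a \<Rightarrow> 'a" where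
  "Emeet S e f = (THE x. is_glb_in S (Idem S) {e, f} x)"

definition distributive_isg :: "'a isg \<Rightarrow> bool" where
  "distributive_isg S \<longleftrightarrow> inverse_semigroup S \<and>
     (\<forall>a\<in>car S. \<forall>b\<in>car S. compat S a b \<longrightarrow>
        (\<exists>x. is_lub_in S (car S) {a, b} x)
      \<and> (\<forall>s\<in>car S. mul S s (join S a b) = join S (mul S s a) (mul S s b)
                  \<and> mul S (join S a b) s = join S (mul S a s) (mul S b s)))"

text \<open>The idempotents form a generalized Boolean algebra: a distributive lattice with
  bottom 0 in which every principal order ideal is a unital Boolean algebra
  (i.e. relatively complemented).\<close>
definition gen_boolean_idem :: "'a isg \<Rightarrow> bool" where
  "gen_boolean_idem S \<longleftrightarrow>
     (\<forall>e\<in>Idem S. \<forall>f\<in>Idem S. (\<exists>x. is_lub_in S (Idem S) {e, f} x)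
                            \<and> (\<exists>x. is_glb_in S (Idem S) {e, f} x))
   \<and> (\<forall>e\<in>Idem S. \<forall>f\<in>Idem S. \<forall>g\<in>Idem S.
        Emeet S e (Ejoin S f g) = Ejoin S (Emeet S e f) (Emeet S e g))
   \<and> zer S \<in> Idem S \<and> (\<forall>e\<in>Idem S. leq S (zer S) e)
   \<and> (\<forall>e\<in>Idem S. \<forall>f\<in>Idem S. leq S f e \<longrightarrow>
        (\<exists>g\<in>Idem S. leq S g e \<and> Emeet S f g = zer S \<and> Ejoin S f g = e))"

definition boolean_isg :: "'a isg \<Rightarrow> bool" where
  "boolean_isg S \<longleftrightarrow> distributive_isg S \<and> gen_boolean_idem S"

text \<open>Relative complement e \ f of idempotents f <= e, and a \ b = a (d(a) \ d(b)) for b <= a.\<close>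
definition ecompl :: "'a isg \<Rightarrow> 'a \<Rightarrow> 'a \<Rightarrow> 'a" where
  "ecompl S e f = (THE g. g \<in> Idem S \<and> leq S g e \<and> Emeet S f g = zer S \<and> Ejoin S f g = e)"

definition bdiff :: "'a isg \<Rightarrow> 'a \<Rightarrow> 'a \<Rightarrow> 'a" where
  "bdiff S a b = mul S a (ecompl S (dom S a) (dom S b))"

definition hom :: "'a isg \<Rightarrow> 'b isg \<Rightarrow> ('a \<Rightarrow> 'b) \<Rightarrow> bool" where
  "hom S T f \<longleftrightarrow> (\<forall>a\<in>car S. f a \<in> car T)
     \<and> (\<forall>a\<in>car S. \<forall>b\<in>car S. f (mul S a b) = mul T (f a) (f b))
     \<and> f (zer S) = zer T"

definition bmorphism :: "'a isg \<Rightarrow> 'b isg \<Rightarrow> ('a \<Rightarrow> 'b) \<Rightarrow> bool" where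
  "bmorphism S T f \<longleftrightarrow> hom S T f
     \<and> (\<forall>a\<in>car S. \<forall>b\<in>car S. compat S a b \<longrightarrow> f (join S a b) = join T (f a) (f b))"

definition is_cover :: "'a isg \<Rightarrow> 'a \<Rightarrow> 'a set \<Rightarrow> bool" where
  "is_cover S a A \<longleftrightarrow> finite A \<and> A \<subseteq> down S a
     \<and> (\<forall>x\<in>down S a. x \<noteq> zer S \<longrightarrow> (\<exists>ai\<in>A. meet S x ai \<noteq> zer S))"

definition cover_to_join :: "'a isg \<Rightarrow> 'b isg \<Rightarrow> ('a \<Rightarrow> 'b) \<Rightarrow> bool" where
  "cover_to_join S T f \<longleftrightarrow> boolean_isg T \<and> hom S T f
     \<and> (\<forall>a\<in>car S. \<forall>A. is_cover S a A \<longrightarrow> is_lub_in T (car T) (f ` A) (f a))"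

section \<open>Booleanization (universal property w.r.t. targets of type 'c)\<close>

definition booleanization :: "'a isg \<Rightarrow> 'b isg \<Rightarrow> ('a \<Rightarrow> 'b) \<Rightarrow> 'c itself \<Rightarrow> bool" where
  "booleanization S B \<beta> (_ :: 'c itself) \<longleftrightarrow>
     boolean_isg B \<and> hom S B \<beta> \<and> inj_on \<beta> (car S)
   \<and> (\<forall>(T :: 'c isg) \<theta>. boolean_isg T \<and> hom S T \<theta> \<longrightarrow>
        (\<exists>\<theta>'. bmorphism B T \<theta>' \<and> (\<forall>s\<in>car S. \<theta>' (\<beta> s) = \<theta> s)
           \<and> (\<forall>\<theta>''. bmorphism B T \<theta>'' \<and> (\<forall>s\<in>car S. \<theta>'' (\<beta> s) = \<theta> s)
                 \<longrightarrow> (\<forall>x\<in>car B. \<theta>'' x = \<theta>' x))))"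

definition additive_ideal :: "'a isg \<Rightarrow> 'a set \<Rightarrow> bool" where
  "additive_ideal B I \<longleftrightarrow> I \<subseteq> car B
     \<and> (\<forall>s\<in>car B. \<forall>a\<in>I. mul B s a \<in> I \<and> mul B a s \<in> I)
     \<and> (\<forall>a\<in>I. \<forall>b\<in>I. compat B a b \<longrightarrow> join B a b \<in> I)"

definition ck_gens :: "'a isg \<Rightarrow> 'b isg \<Rightarrow> ('a \<Rightarrow> 'b) \<Rightarrow> 'b set" where
  "ck_gens S B \<beta> = {bdiff B (\<beta> a) (join_set B (\<beta> ` A)) | a A. a \<in> car S \<and> is_cover S a A}"

definition ck_ideal :: "'a isg \<Rightarrow> 'b isg \<Rightarrow> ('a \<Rightarrow> 'b) \<Rightarrow> 'b set" where
  "ck_ideal S B \<beta> = \<Inter>{I. additive_ideal B I \<and> ck_gens S B \<beta> \<subseteq> I}"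

definition eps :: "'a isg \<Rightarrow> 'a set \<Rightarrow> ('a \<times> 'a) set" where
  "eps B I = {(a, b). a \<in> car B \<and> b \<in> car B \<and>
     (\<exists>c\<in>car B. leq B c a \<and> leq B c b \<and> bdiff B a c \<in> I \<and> bdiff B b c \<in> I)}"

definition quot_isg :: "'a isg \<Rightarrow> ('a \<times> 'a) set \<Rightarrow> 'a set isg" where
  "quot_isg B R = \<lparr> car = car B // R,
     mul = (\<lambda>X Y. R `` {mul B (SOME x. x \<in> X) (SOME y. y \<in> Y)}),
     zer = R `` {zer B} \<rparr>"

definition exel :: "'a isg \<Rightarrow> 'b isg \<Rightarrow> ('a \<Rightarrow> 'b) \<Rightarrow> 'b set isg" where
  "exel S B \<beta> = quot_isg B (eps B (ck_ideal S B \<beta>))"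

definition nu :: "'a isg \<Rightarrow> 'b isg \<Rightarrow> ('a \<Rightarrow> 'b) \<Rightarrow> 'b \<Rightarrow> 'b set" where
  "nu S B \<beta> x = eps B (ck_ideal S B \<beta>) `` {x}"

definition tau :: "'a isg \<Rightarrow> 'b isg \<Rightarrow> ('a \<Rightarrow> 'b) \<Rightarrow> 'a \<Rightarrow> 'b set" where
  "tau S B \<beta> = nu S B \<beta> \<circ> \<beta>"

end

theory Submission
  imports Defs
begin

locale isg =
  fixes S :: "'a isg"
  assumes ISG: "inverse_semigroup S"
begin

abbreviation M (infixl "\<cdot>" 70) where "x \<cdot> y \<equiv> mul S x y"
abbreviation iv where "iv x \<equiv> inv S x"
abbreviation C where "C \<equiv> car S"
abbreviation z where "z \<equiv> zer S"

lemma zer_in[simp]: "z \<in> C" using ISG unfolding inverse_semigroup_def by blast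
lemma mul_in[simp]: "a \<in> C \<Longrightarrow> b \<in> C \<Longrightarrow> a \<cdot> b \<in> C" using ISG unfolding inverse_semigroup_def by blast
lemma assoc[simp]: "a \<in> C \<Longrightarrow> b \<in> C \<Longrightarrow> c \<in> C \<Longrightarrow> (a \<cdot> b) \<cdot> c = a \<cdot> (b \<cdot> c)"
  using ISG unfolding inverse_semigroup_def by blast
lemma zl[simp]: "a \<in> C \<Longrightarrow> z \<cdot> a = z" using ISG unfolding inverse_semigroup_def by blast
lemma zr[simp]: "a \<in> C \<Longrightarrow> a \<cdot> z = z" using ISG unfolding inverse_semigroup_def by blast

lemma inv_props: assumes "a \<in> C" shows "iv a \<in> C \<and> a \<cdot> iv a \<cdot> a = a \<and> iv a \<cdot> a \<cdot> iv a = iv a"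
proof -
  have "\<exists>!b. b \<in> C \<and> a \<cdot> b \<cdot> a = a \<and> b \<cdot> a \<cdot> b = b" using ISG assms unfolding inverse_semigroup_def by blast
  then show ?thesis unfolding inv_def by (rule theI')
qed

lemma inv_in[simp]: "a \<in> C \<Longrightarrow> iv a \<in> C" using inv_props by blast
lemma inv1[simp]: "a \<in> C \<Longrightarrow> a \<cdot> (iv a \<cdot> a) = a" using inv_props by auto
lemma inv2[simp]: "a \<in> C \<Longrightarrow> iv a \<cdot> (a \<cdot> iv a) = iv a" using inv_props by auto
lemma inv1'[simp]: "a \<in> C \<Longrightarrow> x \<in> C \<Longrightarrow> a \<cdot> (iv a \<cdot> (a \<cdot> x)) = a \<cdot> x"
  by (metis assoc inv1 inv_in mul_in)
lemma inv2'[simp]: "a \<in> C \<Longrightarrow> x \<in> C \<Longrightarrow> iv a \<cdot> (a \<cdot> (iv a \<cdot> x)) = iv a \<cdot> x"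
  by (metis assoc inv2 inv_in mul_in)

lemma inv_unique: assumes "a \<in> C" "b \<in> C" "a \<cdot> b \<cdot> a = a" "b \<cdot> a \<cdot> b = b" shows "iv a = b"
proof -
  have "\<exists>!b. b \<in> C \<and> a \<cdot> b \<cdot> a = a \<and> b \<cdot> a \<cdot> b = b" using ISG assms unfolding inverse_semigroup_def by blast
  then show ?thesis using assms inv_props[OF assms(1)] by blast
qed

lemma idem_in: "idem S e \<Longrightarrow> e \<in> C" by (simp add: idem_def)
lemma idem_sq[simp]: "idem S e \<Longrightarrow> e \<cdot> e = e" by (simp add: idem_def)
lemma idem_sq'[simp]: "idem S e \<Longrightarrow> x \<in> C \<Longrightarrow> e \<cdot> (e \<cdot> x) = e \<cdot> x"
  by (metis assoc idem_def)
lemma idem_zer[simp]: "idem S z" by (simp add: idem_def)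

lemma inv_idem[simp]: "idem S e \<Longrightarrow> iv e = e"
  by (rule inv_unique) (auto simp: idem_def)

lemma idem_comm: assumes e: "idem S e" and f: "idem S f" shows "e \<cdot> f = f \<cdot> e"
proof -
  have eC: "e \<in> C" and fC: "f \<in> C" using e f by (auto simp: idem_def)
  define x where "x = iv (e \<cdot> f)"
  have xC: "x \<in> C" using eC fC by (simp add: x_def)
  have x1: "e \<cdot> f \<cdot> x \<cdot> (e \<cdot> f) = e \<cdot> f" and x2: "x \<cdot> (e \<cdot> f) \<cdot> x = x"
    using inv_props[of "e \<cdot> f"] eC fC by (auto simp: x_def)
  have "iv (e \<cdot> f) = f \<cdot> x \<cdot> e"
  proof (rule inv_unique)
    show "e \<cdot> f \<cdot> (f \<cdot> x \<cdot> e) \<cdot> (e \<cdot> f) = e \<cdot> f" using x1 e f eC fC xC by simp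
    have "x \<cdot> (e \<cdot> (f \<cdot> (x \<cdot> e))) = (x \<cdot> (e \<cdot> f) \<cdot> x) \<cdot> e" using eC fC xC by simp
    then have "x \<cdot> (e \<cdot> (f \<cdot> (x \<cdot> e))) = x \<cdot> e" using x2 by simp
    then show "f \<cdot> x \<cdot> e \<cdot> (e \<cdot> f) \<cdot> (f \<cdot> x \<cdot> e) = f \<cdot> x \<cdot> e"
      using e f eC fC xC by simp
  qed (use eC fC xC in auto)
  then have xx: "x = f \<cdot> x \<cdot> e" by (simp add: x_def)
  have "x \<cdot> x = x"
  proof -
    have "x \<cdot> x = f \<cdot> x \<cdot> e \<cdot> (f \<cdot> x \<cdot> e)" using xx by simp
    also have "\<dots> = f \<cdot> (x \<cdot> (e \<cdot> f) \<cdot> x) \<cdot> e" using eC fC xC by simp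
    also have "\<dots> = f \<cdot> x \<cdot> e" using x2 by simp
    finally show ?thesis using xx by simp
  qed
  then have xi: "idem S x" using xC by (simp add: idem_def)
  have "iv x = e \<cdot> f" using inv_unique[of x "e \<cdot> f"] x1 x2 xC eC fC by simp
  then have efx: "e \<cdot> f = x" using xi by simp
  then have ef: "idem S (e \<cdot> f)" using xi by simp
  define y where "y = iv (f \<cdot> e)"
  have yC: "y \<in> C" using eC fC by (simp add: y_def)
  have y1: "f \<cdot> e \<cdot> y \<cdot> (f \<cdot> e) = f \<cdot> e" and y2: "y \<cdot> (f \<cdot> e) \<cdot> y = y"
    using inv_props[of "f \<cdot> e"] eC fC by (auto simp: y_def)
  have "iv (f \<cdot> e) = e \<cdot> y \<cdot> f"
  proof (rule inv_unique)
    show "f \<cdot> e \<cdot> (e \<cdot> y \<cdot> f) \<cdot> (f \<cdot> e) = f \<cdot> e" using y1 e f eC fC yC by simp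
    have "y \<cdot> (f \<cdot> (e \<cdot> (y \<cdot> f))) = (y \<cdot> (f \<cdot> e) \<cdot> y) \<cdot> f" using eC fC yC by simp
    then have "y \<cdot> (f \<cdot> (e \<cdot> (y \<cdot> f))) = y \<cdot> f" using y2 by simp
    then show "e \<cdot> y \<cdot> f \<cdot> (f \<cdot> e) \<cdot> (e \<cdot> y \<cdot> f) = e \<cdot> y \<cdot> f"
      using e f eC fC yC by simp
  qed (use eC fC yC in auto)
  then have yy: "y = e \<cdot> y \<cdot> f" by (simp add: y_def)
  have "y \<cdot> y = y"
  proof -
    have "y \<cdot> y = e \<cdot> y \<cdot> f \<cdot> (e \<cdot> y \<cdot> f)" using yy by simp
    also have "\<dots> = e \<cdot> (y \<cdot> (f \<cdot> e) \<cdot> y) \<cdot> f" using eC fC yC by simp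
    also have "\<dots> = e \<cdot> y \<cdot> f" using y2 by simp
    finally show ?thesis using yy by simp
  qed
  then have yi: "idem S y" using yC by (simp add: idem_def)
  have "iv y = f \<cdot> e" using inv_unique[of y "f \<cdot> e"] y1 y2 yC eC fC by simp
  then have fe: "idem S (f \<cdot> e)" using yi by simp
  have "iv (e \<cdot> f) = f \<cdot> e"
  proof (rule inv_unique)
    have "e \<cdot> f \<cdot> (f \<cdot> e) \<cdot> (e \<cdot> f) = (e \<cdot> f) \<cdot> (e \<cdot> f)" using e f eC fC by simp
    then show "e \<cdot> f \<cdot> (f \<cdot> e) \<cdot> (e \<cdot> f) = e \<cdot> f" using ef by simp
    have "f \<cdot> e \<cdot> (e \<cdot> f) \<cdot> (f \<cdot> e) = (f \<cdot> e) \<cdot> (f \<cdot> e)" using e f eC fC by simp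
    then show "f \<cdot> e \<cdot> (e \<cdot> f) \<cdot> (f \<cdot> e) = f \<cdot> e" using fe by simp
  qed (use eC fC in auto)
  then show ?thesis using ef by simp
qed

lemma idem_mul[simp]: assumes "idem S e" "idem S f" shows "idem S (e \<cdot> f)"
proof -
  have "e \<cdot> f \<cdot> (e \<cdot> f) = e \<cdot> (f \<cdot> e) \<cdot> f" using assms by (simp add: idem_def)
  also have "\<dots> = e \<cdot> (e \<cdot> f) \<cdot> f" using idem_comm[OF assms] by simp
  also have "\<dots> = e \<cdot> f" using assms by (simp add: idem_def)
  finally show ?thesis using assms by (simp add: idem_def)
qed

lemma idem_comm': "idem S e \<Longrightarrow> idem S f \<Longrightarrow> x \<in> C \<Longrightarrow> e \<cdot> (f \<cdot> x) = f \<cdot> (e \<cdot> x)"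
  by (metis assoc idem_comm idem_in)

lemma inv_inv[simp]: "a \<in> C \<Longrightarrow> iv (iv a) = a"
  by (rule inv_unique) auto

lemma inv_ii: "a \<in> C \<Longrightarrow> idem S (a \<cdot> iv a)"
  unfolding idem_def by (metis assoc inv1 inv_in mul_in)
lemma inv_ii2: "a \<in> C \<Longrightarrow> idem S (iv a \<cdot> a)"
  using inv_ii[of "iv a"] by simp

lemma inv_mul[simp]: assumes "a \<in> C" "b \<in> C" shows "iv (a \<cdot> b) = iv b \<cdot> iv a"
proof (rule inv_unique)
  have c: "(iv a \<cdot> a) \<cdot> (b \<cdot> iv b) = (b \<cdot> iv b) \<cdot> (iv a \<cdot> a)"
    using idem_comm inv_ii inv_ii2 assms by blast
  have "a \<cdot> b \<cdot> (iv b \<cdot> iv a) \<cdot> (a \<cdot> b) = a \<cdot> ((b \<cdot> iv b) \<cdot> (iv a \<cdot> a)) \<cdot> b" using assms by simp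
  also have "\<dots> = a \<cdot> ((iv a \<cdot> a) \<cdot> (b \<cdot> iv b)) \<cdot> b" using c by simp
  also have "\<dots> = a \<cdot> b" using assms by simp
  finally show "a \<cdot> b \<cdot> (iv b \<cdot> iv a) \<cdot> (a \<cdot> b) = a \<cdot> b" .
  have "iv b \<cdot> iv a \<cdot> (a \<cdot> b) \<cdot> (iv b \<cdot> iv a) = iv b \<cdot> ((iv a \<cdot> a) \<cdot> (b \<cdot> iv b)) \<cdot> iv a" using assms by simp
  also have "\<dots> = iv b \<cdot> ((b \<cdot> iv b) \<cdot> (iv a \<cdot> a)) \<cdot> iv a" using c by simp
  also have "\<dots> = iv b \<cdot> iv a" using assms by simp
  finally show "iv b \<cdot> iv a \<cdot> (a \<cdot> b) \<cdot> (iv b \<cdot> iv a) = iv b \<cdot> iv a" .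
qed (use assms in auto)

lemma inv_zer[simp]: "iv z = z" by simp

lemma conj_idem[simp]: assumes "a \<in> C" "idem S e" shows "idem S (a \<cdot> (e \<cdot> iv a))"
proof -
  have eC: "e \<in> C" using assms idem_in by auto
  have "a \<cdot> (e \<cdot> iv a) \<cdot> (a \<cdot> (e \<cdot> iv a)) = a \<cdot> (e \<cdot> ((iv a \<cdot> a) \<cdot> e)) \<cdot> iv a" using assms eC by simp
  also have "\<dots> = a \<cdot> ((e \<cdot> (iv a \<cdot> a)) \<cdot> e) \<cdot> iv a" using assms eC by simp
  also have "\<dots> = a \<cdot> ((iv a \<cdot> a) \<cdot> (e \<cdot> e)) \<cdot> iv a" using assms eC idem_comm[OF assms(2) inv_ii2[OF assms(1)]]
    by (simp del: assoc) (simp)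
  also have "\<dots> = a \<cdot> (e \<cdot> iv a)" using assms eC by simp
  finally show ?thesis using assms eC by (simp add: idem_def)
qed

lemma conj_idem2[simp]: assumes "a \<in> C" "idem S e" shows "idem S (iv a \<cdot> (e \<cdot> a))"
  using conj_idem[of "iv a" e] assms by simp

lemma idem_iff: "idem S e \<longleftrightarrow> e \<in> C \<and> e \<cdot> e = e" by (simp add: idem_def)

lemma dom_eq: "dom S a = iv a \<cdot> a" by (simp add: dom_def)
lemma ran_eq: "ran S a = a \<cdot> iv a" by (simp add: ran_def)
lemma dom_idem[simp]: "a \<in> C \<Longrightarrow> idem S (dom S a)" by (simp add: dom_def inv_ii2)
lemma ran_idem[simp]: "a \<in> C \<Longrightarrow> idem S (ran S a)" by (simp add: ran_def inv_ii)
lemma dom_in[simp]: "a \<in> C \<Longrightarrow> dom S a \<in> C" by (simp add: dom_def)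
lemma ran_in[simp]: "a \<in> C \<Longrightarrow> ran S a \<in> C" by (simp add: ran_def)
lemma a_dom[simp]: "a \<in> C \<Longrightarrow> a \<cdot> dom S a = a" by (simp add: dom_def)
lemma ran_a[simp]: "a \<in> C \<Longrightarrow> ran S a \<cdot> a = a" by (simp add: ran_def)
lemma ran_a'[simp]: "a \<in> C \<Longrightarrow> x \<in> C \<Longrightarrow> ran S a \<cdot> (a \<cdot> x) = a \<cdot> x" by (simp add: ran_def)
lemma dom_idem_eq[simp]: "idem S e \<Longrightarrow> dom S e = e" by (simp add: dom_def)
lemma ran_idem_eq[simp]: "idem S e \<Longrightarrow> ran S e = e" by (simp add: ran_def)
lemma dom_inv[simp]: "a \<in> C \<Longrightarrow> dom S (iv a) = ran S a" by (simp add: dom_def ran_def)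
lemma ran_inv[simp]: "a \<in> C \<Longrightarrow> ran S (iv a) = dom S a" by (simp add: dom_def ran_def)
lemma dom_zer[simp]: "dom S z = z" by simp

end


context isg begin

lemma idem_mul_dist: "idem S e \<Longrightarrow> idem S f \<Longrightarrow> e \<cdot> f \<in> C" by (simp add: idem_in)

lemma dom_mul_idem: assumes "t \<in> C" "idem S e" shows "dom S (t \<cdot> e) = dom S t \<cdot> e"
proof -
  have eC: "e \<in> C" using assms idem_in by auto
  have "dom S (t \<cdot> e) = e \<cdot> (iv t \<cdot> t \<cdot> e)" using assms eC by (simp add: dom_eq)
  also have "\<dots> = (iv t \<cdot> t) \<cdot> (e \<cdot> e)" using idem_comm[OF assms(2) inv_ii2[OF assms(1)]] assms eC
    by (metis assoc inv_in mul_in)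
  finally show ?thesis using assms by (simp add: dom_eq)
qed

lemma ran_idem_mul: assumes "t \<in> C" "idem S e" shows "ran S (e \<cdot> t) = e \<cdot> ran S t"
proof -
  have eC: "e \<in> C" using assms idem_in by auto
  have "ran S (e \<cdot> t) = dom S (iv t \<cdot> e)" using assms eC by (simp add: dom_eq ran_eq)
  also have "\<dots> = dom S (iv t) \<cdot> e" using dom_mul_idem assms by simp
  also have "\<dots> = e \<cdot> ran S t" using assms idem_comm by simp
  finally show ?thesis .
qed

lemma leqD: "leq S s t \<Longrightarrow> s \<in> C \<and> t \<in> C \<and> s = t \<cdot> dom S s" by (simp add: leq_def)
lemma leq_C1: "leq S s t \<Longrightarrow> s \<in> C" by (simp add: leq_def)
lemma leq_C2: "leq S s t \<Longrightarrow> t \<in> C" by (simp add: leq_def)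

lemma leq_right: assumes "t \<in> C" "idem S e" shows "leq S (t \<cdot> e) t"
proof -
  have eC: "e \<in> C" using assms idem_in by auto
  have "t \<cdot> dom S (t \<cdot> e) = t \<cdot> (dom S t \<cdot> e)" using dom_mul_idem assms by simp
  also have "\<dots> = t \<cdot> e" using assms eC by (simp add: dom_eq)
  finally show ?thesis using assms eC by (simp add: leq_def)
qed

lemma leq_rightI: "t \<in> C \<Longrightarrow> idem S e \<Longrightarrow> s = t \<cdot> e \<Longrightarrow> leq S s t" using leq_right by simp

lemma idem_move: assumes "v \<in> C" "idem S g" shows "g \<cdot> v = v \<cdot> (iv v \<cdot> (g \<cdot> v))"
proof -
  have gC: "g \<in> C" using assms idem_in by auto
  have "v \<cdot> (iv v \<cdot> (g \<cdot> v)) = (v \<cdot> iv v) \<cdot> g \<cdot> v" using assms gC by simp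
  also have "\<dots> = g \<cdot> (v \<cdot> iv v) \<cdot> v" using idem_comm[OF inv_ii[OF assms(1)] assms(2)] by simp
  also have "\<dots> = g \<cdot> v" using assms gC by simp
  finally show ?thesis by simp
qed

lemma leq_left: assumes "t \<in> C" "idem S e" shows "leq S (e \<cdot> t) t"
  using idem_move[OF assms(1,2)] leq_right[of t "iv t \<cdot> (e \<cdot> t)"] assms by simp

lemma leq_leftI: "t \<in> C \<Longrightarrow> idem S e \<Longrightarrow> s = e \<cdot> t \<Longrightarrow> leq S s t" using leq_left by simp

lemma leq_refl[simp]: "a \<in> C \<Longrightarrow> leq S a a" by (simp add: leq_def)

lemma leq_ran: assumes "leq S s t" shows "s = ran S s \<cdot> t"
proof -
  have C: "s \<in> C" "t \<in> C" and s: "s = t \<cdot> dom S s" using assms leq_C1 leq_C2 leqD by blast+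
  have "ran S s \<cdot> t = s \<cdot> iv s \<cdot> t" by (simp add: ran_eq)
  also have "\<dots> = t \<cdot> dom S s \<cdot> (dom S s \<cdot> iv t) \<cdot> t" using C s by (metis dom_idem inv_idem inv_mul dom_in)
  also have "\<dots> = t \<cdot> (dom S s \<cdot> (iv t \<cdot> t))" using C by simp
  also have "\<dots> = t \<cdot> ((iv t \<cdot> t) \<cdot> dom S s)" using C idem_comm[of "dom S s" "iv t \<cdot> t"] inv_ii2 by simp
  also have "\<dots> = t \<cdot> dom S s" using C by simp
  also have "\<dots> = s" using s by simp
  finally show ?thesis by simp
qed

lemma idem_leq: assumes "idem S e" "idem S f" shows "leq S e f \<longleftrightarrow> e = e \<cdot> f"
  using assms idem_comm[OF assms] by (auto simp: leq_def idem_in)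

lemma idem_leq': assumes "idem S e" "idem S f" shows "leq S e f \<longleftrightarrow> e = f \<cdot> e"
  using assms idem_comm[OF assms] by (auto simp: leq_def idem_in)

lemma leq_trans: assumes "leq S a b" "leq S b c" shows "leq S a c"
proof -
  have C: "a \<in> C" "b \<in> C" "c \<in> C" using assms leq_C1 leq_C2 leqD by blast+
  have "a = b \<cdot> dom S a" "b = c \<cdot> dom S b" using assms leq_C1 leq_C2 leqD by blast+
  then have "a = c \<cdot> (dom S b \<cdot> dom S a)" using C by (metis assoc dom_in)
  then show ?thesis using C by (intro leq_rightI[of c "dom S b \<cdot> dom S a"]) auto
qed

lemma dom_mono: assumes "leq S s t" shows "leq S (dom S s) (dom S t)"
proof -
  have C: "s \<in> C" "t \<in> C" and s: "s = t \<cdot> dom S s" using assms leq_C1 leq_C2 leqD by blast+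
  have "dom S s = dom S t \<cdot> dom S s" using dom_mul_idem[of t "dom S s"] s C by simp
  then show ?thesis using idem_leq' C by simp
qed

lemma leq_inv: assumes "leq S s t" shows "leq S (iv s) (iv t)"
proof -
  have C: "s \<in> C" "t \<in> C" and s: "s = t \<cdot> dom S s" using assms leq_C1 leq_C2 leqD by blast+
  have "iv s = dom S s \<cdot> iv t" using C s by (metis dom_idem inv_idem inv_mul dom_in)
  then show ?thesis using C by (intro leq_leftI) auto
qed

lemma leq_inv_iff: "s \<in> C \<Longrightarrow> t \<in> C \<Longrightarrow> leq S (iv s) (iv t) \<longleftrightarrow> leq S s t"
  using leq_inv[of "iv s" "iv t"] leq_inv[of s t] by auto

lemma ran_mono: assumes "leq S s t" shows "leq S (ran S s) (ran S t)"
proof -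
  have C: "s \<in> C" "t \<in> C" using assms leq_C1 leq_C2 by auto
  show ?thesis using dom_mono[OF leq_inv[OF assms]] dom_inv[OF C(1)] dom_inv[OF C(2)] by simp
qed

lemma leq_antisym: assumes "leq S a b" "leq S b a" shows "a = b"
proof -
  have C: "a \<in> C" "b \<in> C" using assms leq_C1 leq_C2 leqD by blast+
  have d1: "dom S a = dom S a \<cdot> dom S b" using dom_mono[OF assms(1)] idem_leq C by simp
  have d2: "dom S b = dom S b \<cdot> dom S a" using dom_mono[OF assms(2)] idem_leq C by simp
  have "dom S a \<cdot> dom S b = dom S b \<cdot> dom S a" using idem_comm[OF dom_idem[OF C(1)] dom_idem[OF C(2)]] .
  then have "dom S a = dom S b" using d1 d2 by argo
  then show ?thesis using leqD[OF assms(1)] a_dom[OF C(2)] by argo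
qed

lemma leq_idem_down: assumes "leq S s e" "idem S e" shows "idem S s"
proof -
  have "s = e \<cdot> dom S s" using leqD[OF assms(1)] by blast
  moreover have "idem S (e \<cdot> dom S s)" using assms leq_C1 by simp
  ultimately show ?thesis by simp
qed

lemma zer_leq[simp]: "t \<in> C \<Longrightarrow> leq S z t"
  by (rule leq_rightI[of t z]) auto

lemma leq_zer: "leq S s z \<Longrightarrow> s = z"
  using leq_antisym zer_leq leq_C1 by blast

lemma leq_mono_mul: assumes "leq S s t" "leq S u v" shows "leq S (s \<cdot> u) (t \<cdot> v)"
proof -
  have C: "s \<in> C" "t \<in> C" "u \<in> C" "v \<in> C" using assms leq_C1 leq_C2 leqD by blast+
  have s: "s = t \<cdot> dom S s" using assms leq_C1 leq_C2 leqD by blast+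
  have u: "u = ran S u \<cdot> v" using leq_ran assms by simp
  define g where "g = dom S s \<cdot> ran S u"
  have g: "idem S g" using C by (simp add: g_def)
  have gC: "g \<in> C" using g idem_in by auto
  have "s \<cdot> u = t \<cdot> (g \<cdot> v)" using C s u by (metis assoc dom_in g_def ran_in)
  also have "\<dots> = t \<cdot> v \<cdot> (iv v \<cdot> (g \<cdot> v))" using idem_move[OF C(4) g] C gC by simp
  finally show ?thesis using C g by (intro leq_rightI) auto
qed

lemma leq_mul_left: "leq S u v \<Longrightarrow> s \<in> C \<Longrightarrow> leq S (s \<cdot> u) (s \<cdot> v)"
  using leq_mono_mul[of s s u v] by simp
lemma leq_mul_right: "leq S u v \<Longrightarrow> s \<in> C \<Longrightarrow> leq S (u \<cdot> s) (v \<cdot> s)"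
  using leq_mono_mul[of u v s s] by simp

lemma leq_common: assumes "leq S x m" "leq S y m"
  shows "leq S x y \<longleftrightarrow> leq S (dom S x) (dom S y)"
proof
  assume "leq S x y" then show "leq S (dom S x) (dom S y)" by (rule dom_mono)
next
  assume d: "leq S (dom S x) (dom S y)"
  have C: "x \<in> C" "y \<in> C" "m \<in> C" using assms leq_C1 leq_C2 leqD by blast+
  have x: "x = m \<cdot> dom S x" and y: "y = m \<cdot> dom S y" using assms leq_C1 leq_C2 leqD by blast+
  have "dom S x = dom S y \<cdot> dom S x" using d idem_leq' C by simp
  then have "x = y \<cdot> dom S x" using x y C by (metis assoc dom_in)
  then show "leq S x y" using C by (intro leq_rightI) auto
qed

lemma leq_eq_common: "leq S x m \<Longrightarrow> leq S y m \<Longrightarrow> dom S x = dom S y \<Longrightarrow> x = y"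
  using leq_common leq_antisym leq_refl by (metis leq_C1 dom_in)

lemma idem_leq_mul1: "idem S e \<Longrightarrow> idem S f \<Longrightarrow> leq S (e \<cdot> f) e"
  using idem_leq idem_comm by (metis idem_mul idem_sq' idem_in)
lemma idem_leq_mul2: "idem S e \<Longrightarrow> idem S f \<Longrightarrow> leq S (e \<cdot> f) f"
  using idem_leq by (simp add: idem_in)

lemma leq_idem_glb: "idem S x \<Longrightarrow> idem S e \<Longrightarrow> idem S f \<Longrightarrow> leq S x e \<Longrightarrow> leq S x f \<Longrightarrow> leq S x (e \<cdot> f)"
  using idem_leq by (metis assoc idem_in idem_mul)

lemma compat_sym: assumes "compat S a b" shows "compat S b a"
proof -
  have C: "a \<in> C" "b \<in> C" and i1: "idem S (iv a \<cdot> b)" and i2: "idem S (a \<cdot> iv b)"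
    using assms unfolding compat_def by blast+
  have "iv b \<cdot> a = iv (iv a \<cdot> b)" using C by simp
  also have "\<dots> = iv a \<cdot> b" using inv_idem[OF i1] .
  finally have 1: "iv b \<cdot> a = iv a \<cdot> b" .
  have "b \<cdot> iv a = iv (a \<cdot> iv b)" using C by simp
  also have "\<dots> = a \<cdot> iv b" using inv_idem[OF i2] .
  finally have 2: "b \<cdot> iv a = a \<cdot> iv b" .
  show ?thesis unfolding compat_def using C i1 i2 1 2 by simp
qed

lemma compat_refl[simp]: "a \<in> C \<Longrightarrow> compat S a a"
  unfolding compat_def using inv_ii inv_ii2 by simp

lemma compat_C: "compat S a b \<Longrightarrow> a \<in> C \<and> b \<in> C" by (simp add: compat_def)

lemma compat_down: assumes "leq S x a" "compat S a b" shows "compat S x b"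
proof -
  have C: "x \<in> C" "a \<in> C" "b \<in> C" using assms leq_C1 compat_C by blast+
  have x1: "x = a \<cdot> dom S x" using assms leqD by blast
  have x2: "x = ran S x \<cdot> a" using assms leq_ran by blast
  have "iv x \<cdot> b = iv (a \<cdot> dom S x) \<cdot> b" using x1 by simp
  also have "\<dots> = dom S x \<cdot> (iv a \<cdot> b)" using C by simp
  finally have 1: "iv x \<cdot> b = dom S x \<cdot> (iv a \<cdot> b)" .
  have "x \<cdot> iv b = ran S x \<cdot> a \<cdot> iv b" using x2 by simp
  also have "\<dots> = ran S x \<cdot> (a \<cdot> iv b)" using C by simp
  finally have 2: "x \<cdot> iv b = ran S x \<cdot> (a \<cdot> iv b)" .
  show ?thesis using assms C 1 2 unfolding compat_def by simp
qed

lemma compat_below: "leq S x a \<Longrightarrow> leq S y a \<Longrightarrow> compat S x y"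
  using compat_down[of x a y] compat_sym compat_down[of y a a] compat_refl[of a] leq_C2 by blast

lemma compat_orth: "a \<in> C \<Longrightarrow> b \<in> C \<Longrightarrow> iv a \<cdot> b = z \<Longrightarrow> a \<cdot> iv b = z \<Longrightarrow> compat S a b"
  unfolding compat_def by simp

lemma compat_inv: "compat S a b \<Longrightarrow> compat S (iv a) (iv b)"
  unfolding compat_def by simp

end 
context isg begin

lemma compatD1: "compat S a b \<Longrightarrow> idem S (iv a \<cdot> b)" unfolding compat_def by blast
lemma compatD2: "compat S a b \<Longrightarrow> idem S (a \<cdot> iv b)" unfolding compat_def by blast

lemma a_dom'[simp]: "a \<in> C \<Longrightarrow> w \<in> C \<Longrightarrow> a \<cdot> (dom S a \<cdot> w) = a \<cdot> w"
  by (simp add: dom_eq)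

lemma ext2: assumes "a \<cdot> b = c \<cdot> d" "a \<in> C" "b \<in> C" "c \<in> C" "d \<in> C" "w \<in> C" shows "a \<cdot> (b \<cdot> w) = c \<cdot> (d \<cdot> w)"
proof -
  have "a \<cdot> (b \<cdot> w) = (a \<cdot> b) \<cdot> w" using assms(2-6) by simp
  also have "\<dots> = (c \<cdot> d) \<cdot> w" by (simp only: assms(1))
  also have "\<dots> = c \<cdot> (d \<cdot> w)" using assms(2-6) by simp
  finally show ?thesis .
qed

lemma compat_dom: assumes "compat S x y" shows "x \<cdot> dom S y = y \<cdot> dom S x"
proof -
  have C: "x \<in> C" "y \<in> C" using assms compat_C by auto
  have f: "idem S (x \<cdot> iv y)" using assms unfolding compat_def by blast
  have fi: "y \<cdot> iv x = x \<cdot> iv y" using inv_idem[OF f] C by simp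
  have cm: "dom S x \<cdot> dom S y = dom S y \<cdot> dom S x" using idem_comm[OF dom_idem[OF C(1)] dom_idem[OF C(2)]] .
  have "x \<cdot> dom S y = x \<cdot> (dom S x \<cdot> dom S y)" using C by simp
  also have "\<dots> = x \<cdot> (dom S y \<cdot> dom S x)" using cm by simp
  also have "\<dots> = (x \<cdot> iv y) \<cdot> (y \<cdot> iv x) \<cdot> x" using C by (simp add: dom_eq)
  also have "\<dots> = (x \<cdot> iv y) \<cdot> (x \<cdot> iv y) \<cdot> x" using fi by simp
  also have "\<dots> = (x \<cdot> iv y) \<cdot> x" using f by simp
  also have "\<dots> = (y \<cdot> iv x) \<cdot> x" using fi by simp
  also have "\<dots> = y \<cdot> dom S x" using C by (simp add: dom_eq)
  finally show ?thesis .
qed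

lemma compat_mul_l: assumes "compat S a b" "s \<in> C" shows "compat S (s \<cdot> a) (s \<cdot> b)"
proof -
  have C: "a \<in> C" "b \<in> C" using assms compat_C by auto
  have "leq S (dom S s \<cdot> a) a" using leq_left[of a "dom S s"] C assms by simp
  then have "compat S (dom S s \<cdot> a) b" using compat_down assms(1) by blast
  then have i: "idem S (iv (dom S s \<cdot> a) \<cdot> b)" unfolding compat_def by blast
  have "iv (dom S s \<cdot> a) \<cdot> b = iv (s \<cdot> a) \<cdot> (s \<cdot> b)" using C assms by (simp add: dom_eq)
  then have 1: "idem S (iv (s \<cdot> a) \<cdot> (s \<cdot> b))" using i by simp
  have "idem S (a \<cdot> iv b)" using assms unfolding compat_def by blast
  then have "idem S (s \<cdot> ((a \<cdot> iv b) \<cdot> iv s))" using assms C conj_idem by blast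
  moreover have "s \<cdot> ((a \<cdot> iv b) \<cdot> iv s) = (s \<cdot> a) \<cdot> iv (s \<cdot> b)" using C assms by simp
  ultimately have 2: "idem S ((s \<cdot> a) \<cdot> iv (s \<cdot> b))" by simp
  show ?thesis using 1 2 C assms unfolding compat_def by simp
qed

lemma compat_mul_r: assumes "compat S a b" "s \<in> C" shows "compat S (a \<cdot> s) (b \<cdot> s)"
proof -
  have C: "a \<in> C" "b \<in> C" using assms compat_C by auto
  have "compat S (iv s \<cdot> iv a) (iv s \<cdot> iv b)" using compat_mul_l[OF compat_inv[OF assms(1)]] assms by simp
  then have "compat S (iv (iv s \<cdot> iv a)) (iv (iv s \<cdot> iv b))" by (rule compat_inv)
  then show ?thesis using C assms by simp
qed

lemma idem_compat: "idem S e \<Longrightarrow> idem S f \<Longrightarrow> compat S e f"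
  unfolding compat_def by (simp add: idem_in)

lemma lub_unique: "is_lub_in S X A x \<Longrightarrow> is_lub_in S X A y \<Longrightarrow> x = y"
  unfolding is_lub_in_def using leq_antisym by blast
lemma glb_unique: "is_glb_in S X A x \<Longrightarrow> is_glb_in S X A y \<Longrightarrow> x = y"
  unfolding is_glb_in_def using leq_antisym by blast

lemma join_set_eq: "is_lub_in S C A x \<Longrightarrow> join_set S A = x"
  unfolding join_set_def using lub_unique by blast
lemma join_eq: "is_lub_in S C {a, b} x \<Longrightarrow> join S a b = x"
  unfolding join_def using join_set_eq by blast
lemma meet_eq: "is_glb_in S C {a, b} x \<Longrightarrow> meet S a b = x"
  unfolding meet_def using glb_unique by blast
lemma Ejoin_eq: "is_lub_in S (Idem S) {a, b} x \<Longrightarrow> Ejoin S a b = x"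
  unfolding Ejoin_def using lub_unique by blast

lemma glb_idem: "idem S e \<Longrightarrow> idem S f \<Longrightarrow> is_glb_in S (Idem S) {e, f} (e \<cdot> f)"
  unfolding is_glb_in_def Idem_def using idem_leq_mul1 idem_leq_mul2 leq_idem_glb by auto

lemma Emeet_eq[simp]: "idem S e \<Longrightarrow> idem S f \<Longrightarrow> Emeet S e f = e \<cdot> f"
  unfolding Emeet_def using glb_idem glb_unique by blast

lemma lub_empty: "is_lub_in S C {} z"
  unfolding is_lub_in_def by simp

end
lemma hom_in: "hom S T f \<Longrightarrow> a \<in> car S \<Longrightarrow> f a \<in> car T" by (simp add: hom_def)
lemma hom_mul: "hom S T f \<Longrightarrow> a \<in> car S \<Longrightarrow> b \<in> car S \<Longrightarrow> f (mul S a b) = mul T (f a) (f b)" by (simp add: hom_def)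
lemma hom_zer: "hom S T f \<Longrightarrow> f (zer S) = zer T" by (simp add: hom_def)

lemma hom_inv: assumes "isg S" "isg T" "hom S T f" "a \<in> car S" shows "f (inv S a) = inv T (f a)"
proof -
  interpret s: isg S by fact
  interpret t: isg T by fact
  have iC: "inv S a \<in> car S" using assms(4) by simp
  have aiC: "mul S a (inv S a) \<in> car S" "mul S (inv S a) a \<in> car S" using assms(4) by simp_all
  have a: "f a \<in> car T" "f (inv S a) \<in> car T" using hom_in[OF assms(3)] assms(4) iC by blast+
  have m1: "f (mul S (mul S a (inv S a)) a) = mul T (f (mul S a (inv S a))) (f a)" using hom_mul[OF assms(3) aiC(1) assms(4)] .
  have m2: "f (mul S a (inv S a)) = mul T (f a) (f (inv S a))" using hom_mul[OF assms(3) assms(4) iC] .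
  have m3: "f (mul S (mul S (inv S a) a) (inv S a)) = mul T (f (mul S (inv S a) a)) (f (inv S a))" using hom_mul[OF assms(3) aiC(2) iC] .
  have m4: "f (mul S (inv S a) a) = mul T (f (inv S a)) (f a)" using hom_mul[OF assms(3) iC assms(4)] .
  have e1: "mul S (mul S a (inv S a)) a = a" using s.inv_props[OF assms(4)] by blast
  have e2: "mul S (mul S (inv S a) a) (inv S a) = inv S a" using s.inv_props[OF assms(4)] by blast
  have 1: "mul T (mul T (f a) (f (inv S a))) (f a) = f a" using m1 m2 e1 by simp
  have 2: "mul T (mul T (f (inv S a)) (f a)) (f (inv S a)) = f (inv S a)" using m3 m4 e2 by simp
  show ?thesis using t.inv_unique[OF a 1 2] by simp
qed

lemma hom_dom: "isg S \<Longrightarrow> isg T \<Longrightarrow> hom S T f \<Longrightarrow> a \<in> car S \<Longrightarrow> f (dom S a) = dom T (f a)"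
  by (simp add: dom_def hom_mul hom_inv isg.inv_in)
lemma hom_ran: "isg S \<Longrightarrow> isg T \<Longrightarrow> hom S T f \<Longrightarrow> a \<in> car S \<Longrightarrow> f (ran S a) = ran T (f a)"
  by (simp add: ran_def hom_mul hom_inv isg.inv_in)
lemma hom_idem: "hom S T f \<Longrightarrow> idem S e \<Longrightarrow> idem T (f e)"
  unfolding idem_def using hom_in hom_mul by metis
lemma hom_leq: assumes "isg S" "isg T" "hom S T f" "leq S a b" shows "leq T (f a) (f b)"
proof -
  have C: "a \<in> car S" "b \<in> car S" and e: "a = mul S b (dom S a)" using assms(4) unfolding leq_def by blast+
  have "f a = mul T (f b) (f (dom S a))" using hom_mul[OF assms(3) C(2) isg.dom_in[OF assms(1) C(1)]] e by simp
  then have "f a = mul T (f b) (dom T (f a))" using hom_dom[OF assms(1-3) C(1)] by simp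
  then show ?thesis unfolding leq_def using hom_in[OF assms(3)] C by blast
qed
lemma hom_compat: assumes "isg S" "isg T" "hom S T f" "compat S a b" shows "compat T (f a) (f b)"
proof -
  have C: "a \<in> car S" "b \<in> car S" and i: "idem S (mul S (inv S a) b)" "idem S (mul S a (inv S b))"
    using assms(4) unfolding compat_def by blast+
  have "idem T (f (mul S (inv S a) b))" "idem T (f (mul S a (inv S b)))" using hom_idem[OF assms(3)] i by blast+
  then show ?thesis unfolding compat_def using hom_mul[OF assms(3)] hom_inv[OF assms(1-3)] hom_in[OF assms(3)] C isg.inv_in[OF assms(1)]
    by simp
qed


context isg begin

lemma lubD1: "is_lub_in S X A x \<Longrightarrow> x \<in> X" unfolding is_lub_in_def by blast
lemma lubD2: "is_lub_in S X A x \<Longrightarrow> a \<in> A \<Longrightarrow> leq S a x" unfolding is_lub_in_def by blast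
lemma lubD3: "is_lub_in S X A x \<Longrightarrow> y \<in> X \<Longrightarrow> (\<And>a. a \<in> A \<Longrightarrow> leq S a y) \<Longrightarrow> leq S x y"
  unfolding is_lub_in_def by blast
lemma lubI: "x \<in> X \<Longrightarrow> (\<And>a. a \<in> A \<Longrightarrow> leq S a x) \<Longrightarrow> (\<And>y. y \<in> X \<Longrightarrow> (\<And>a. a \<in> A \<Longrightarrow> leq S a y) \<Longrightarrow> leq S x y) \<Longrightarrow> is_lub_in S X A x"
  unfolding is_lub_in_def by blast

lemma lub_insert: assumes "is_lub_in S X {p, q} r" "is_lub_in S X B q" shows "is_lub_in S X (insert p B) r"
proof (rule lubI)
  show "r \<in> X" using lubD1[OF assms(1)] .
  fix a assume "a \<in> insert p B"
  then show "leq S a r"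
  proof
    assume "a = p" then show ?thesis using lubD2[OF assms(1)] by blast
  next
    assume "a \<in> B" then have "leq S a q" using lubD2[OF assms(2)] by blast
    moreover have "leq S q r" using lubD2[OF assms(1)] by blast
    ultimately show ?thesis using leq_trans by blast
  qed
next
  fix y assume y: "y \<in> X" and ub: "\<And>a. a \<in> insert p B \<Longrightarrow> leq S a y"
  have "leq S q y" using lubD3[OF assms(2) y] ub by blast
  moreover have "leq S p y" using ub by blast
  ultimately show "leq S r y" using lubD3[OF assms(1) y] by blast
qed

lemma lub_empty': "is_lub_in S C {} x \<longleftrightarrow> x = z"
  using lub_empty lub_unique by blast

lemma lub_pair_sym: "is_lub_in S X {a, b} x \<Longrightarrow> is_lub_in S X {b, a} x"
  by (simp add: insert_commute)

end

locale disg = isg +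
  assumes DIST: "distributive_isg S"
begin

lemma join_lub: assumes "compat S a b" shows "is_lub_in S C {a, b} (join S a b)"
proof -
  have C: "a \<in> C" "b \<in> C" using assms compat_C by blast+
  obtain x where "is_lub_in S C {a, b} x" using DIST assms C unfolding distributive_isg_def by blast
  then show ?thesis using join_eq by simp
qed

lemma join_in[simp]: "compat S a b \<Longrightarrow> join S a b \<in> C" using join_lub lubD1 by blast
lemma join_ub1: "compat S a b \<Longrightarrow> leq S a (join S a b)" using join_lub lubD2 by blast
lemma join_ub2: "compat S a b \<Longrightarrow> leq S b (join S a b)" using join_lub lubD2 by blast
lemma join_least: "compat S a b \<Longrightarrow> leq S a y \<Longrightarrow> leq S b y \<Longrightarrow> leq S (join S a b) y"
  using join_lub[of a b] lubD3[of C "{a,b}" "join S a b" y] leq_C2 by blast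

lemma join_comm: "join S a b = join S b a" unfolding join_def by (simp add: insert_commute)

lemma dist_l: "compat S a b \<Longrightarrow> s \<in> C \<Longrightarrow> s \<cdot> join S a b = join S (s \<cdot> a) (s \<cdot> b)"
  using DIST compat_C unfolding distributive_isg_def by blast
lemma dist_r: "compat S a b \<Longrightarrow> s \<in> C \<Longrightarrow> join S a b \<cdot> s = join S (a \<cdot> s) (b \<cdot> s)"
  using DIST compat_C unfolding distributive_isg_def by blast

lemma compat_zer[simp]: "a \<in> C \<Longrightarrow> compat S a z" unfolding compat_def by simp
lemma compat_zer'[simp]: "a \<in> C \<Longrightarrow> compat S z a" unfolding compat_def by simp

lemma join_zer[simp]: "a \<in> C \<Longrightarrow> join S a z = a"
  by (rule join_eq, rule lubI) auto
lemma join_zer'[simp]: "a \<in> C \<Longrightarrow> join S z a = a"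
  using join_zer join_comm by metis

lemma join_self[simp]: "a \<in> C \<Longrightarrow> join S a a = a"
  by (rule join_eq, rule lubI) auto

lemma below_join: "leq S a m \<Longrightarrow> a = m \<cdot> dom S a" using leqD by blast

lemma join_idem: assumes "idem S e" "idem S f" shows "idem S (join S e f)"
proof -
  have c: "compat S e f" using idem_compat assms by blast
  define x where "x = join S e f"
  have xC: "x \<in> C" using c by (simp add: x_def)
  have "leq S e x" "leq S f x" using join_ub1 join_ub2 c x_def by blast+
  then have ex: "x \<cdot> e = e" "x \<cdot> f = f" using below_join assms by (metis dom_idem_eq)+
  have "x \<cdot> x = join S (x \<cdot> e) (x \<cdot> f)" using dist_l[OF c xC] x_def by simp
  also have "\<dots> = x" using ex x_def by simp
  finally show ?thesis using xC x_def by (simp add: idem_def)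
qed

lemma Ejoin_join: assumes "idem S e" "idem S f" shows "Ejoin S e f = join S e f"
proof (rule Ejoin_eq, rule lubI)
  have c: "compat S e f" using idem_compat assms by blast
  show "join S e f \<in> Idem S" using join_idem assms by (simp add: Idem_def)
  show "\<And>a. a \<in> {e, f} \<Longrightarrow> leq S a (join S e f)" using join_ub1 join_ub2 c by blast
  show "\<And>y. y \<in> Idem S \<Longrightarrow> (\<And>a. a \<in> {e, f} \<Longrightarrow> leq S a y) \<Longrightarrow> leq S (join S e f) y"
    using join_least c by blast
qed

lemma dom_join: assumes "compat S a b" shows "dom S (join S a b) = join S (dom S a) (dom S b)"
proof -
  have C: "a \<in> C" "b \<in> C" using assms compat_C by blast+
  define m where "m = join S a b"
  define e where "e = join S (dom S a) (dom S b)"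
  have mC: "m \<in> C" using assms m_def by simp
  have ce: "compat S (dom S a) (dom S b)" using idem_compat C by simp
  have e: "idem S e" using join_idem C e_def by simp
  have am: "leq S a m" "leq S b m" using join_ub1 join_ub2 assms m_def by blast+
  have "m \<cdot> e = join S (m \<cdot> dom S a) (m \<cdot> dom S b)" using dist_l[OF ce mC] e_def by simp
  also have "\<dots> = m" using below_join[OF am(1)] below_join[OF am(2)] m_def by simp
  finally have me: "m \<cdot> e = m" .
  have "dom S m = dom S m \<cdot> e" using dom_mul_idem[OF mC e] me by simp
  then have 1: "leq S (dom S m) e" using idem_leq e mC by simp
  have "leq S (dom S a) (dom S m)" "leq S (dom S b) (dom S m)" using dom_mono am by blast+
  then have 2: "leq S e (dom S m)" using join_least ce e_def by blast
  show ?thesis using leq_antisym[OF 1 2] m_def e_def by simp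
qed

lemma join_mono: assumes "compat S a b" "compat S c d" "leq S a c" "leq S b d"
  shows "leq S (join S a b) (join S c d)"
proof -
  have "leq S c (join S c d)" "leq S d (join S c d)" using join_ub1 join_ub2 assms by blast+
  then show ?thesis using join_least assms leq_trans by blast
qed

lemma inv_join: assumes "compat S a b" shows "iv (join S a b) = join S (iv a) (iv b)"
proof -
  have C: "a \<in> C" "b \<in> C" using assms compat_C by blast+
  have c': "compat S (iv a) (iv b)" using compat_inv assms by blast
  have "is_lub_in S C {iv a, iv b} (iv (join S a b))"
  proof (rule lubI)
    show "iv (join S a b) \<in> C" using assms by simp
    show "\<And>x. x \<in> {iv a, iv b} \<Longrightarrow> leq S x (iv (join S a b))"
      using leq_inv join_ub1 join_ub2 assms by blast
    fix y assume y: "y \<in> C" and ub: "\<And>x. x \<in> {iv a, iv b} \<Longrightarrow> leq S x y"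
    have "leq S a (iv y)" "leq S b (iv y)" using leq_inv ub C y by (metis insertI1 insertI2 singletonI inv_inv)+
    then have "leq S (join S a b) (iv y)" using join_least assms by blast
    then show "leq S (iv (join S a b)) y" using leq_inv y by fastforce
  qed
  then show ?thesis using join_eq by simp
qed

lemma compat_join: assumes "compat S a x" "compat S a y" "compat S x y" shows "compat S a (join S x y)"
proof -
  have C: "a \<in> C" "x \<in> C" "y \<in> C" using assms compat_C by blast+
  have i1: "idem S (iv a \<cdot> x)" "idem S (iv a \<cdot> y)" using assms compatD1 by blast+
  have i2: "idem S (a \<cdot> iv x)" "idem S (a \<cdot> iv y)" using assms compatD2 by blast+
  have "iv a \<cdot> join S x y = join S (iv a \<cdot> x) (iv a \<cdot> y)" using dist_l assms(3) C by simp
  then have 1: "idem S (iv a \<cdot> join S x y)" using join_idem i1 by simp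
  have "a \<cdot> iv (join S x y) = join S (a \<cdot> iv x) (a \<cdot> iv y)" using dist_l compat_inv[OF assms(3)] C inv_join assms(3) by simp
  then have 2: "idem S (a \<cdot> iv (join S x y))" using join_idem i2 by simp
  show ?thesis unfolding compat_def using 1 2 C assms(3) by simp
qed

lemma fin_lub: assumes "finite A" "A \<subseteq> down S m" "m \<in> C" shows "\<exists>j. is_lub_in S C A j \<and> leq S j m"
  using assms
proof (induction A rule: finite_induct)
  case empty then show ?case using lub_empty zer_leq by blast
next
  case (insert x A)
  then obtain j where j: "is_lub_in S C A j" "leq S j m" by (auto)
  have xm: "leq S x m" using insert.prems by (simp add: down_def)
  have c: "compat S x j" using compat_below[OF xm j(2)] .
  have "is_lub_in S C (insert x A) (join S x j)" using lub_insert[OF join_lub[OF c] j(1)] .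
  moreover have "leq S (join S x j) m" using join_least[OF c xm j(2)] .
  ultimately show ?case by blast
qed

end

lemma fin_lub_pres:
  assumes D: "disg S" and T: "isg T"
    and fC: "\<And>x. x \<in> car S \<Longrightarrow> f x \<in> car T"
    and fz: "f (zer S) = zer T"
    and fj: "\<And>x y. compat S x y \<Longrightarrow> is_lub_in T (car T) {f x, f y} (f (join S x y))"
    and A: "finite A" "A \<subseteq> down S m" "m \<in> car S"
  shows "is_lub_in T (car T) (f ` A) (f (join_set S A))"
  using A
proof (induction A rule: finite_induct)
  case empty
  interpret d: disg S by fact
  interpret t: isg T by fact
  have "join_set S {} = zer S" using d.join_set_eq d.lub_empty by blast
  then show ?case using fz t.lub_empty by simp
next
  case (insert x A)
  interpret d: disg S by fact
  interpret t: isg T by fact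
  have Am: "A \<subseteq> down S m" using insert.prems by blast
  obtain j where j: "is_lub_in S (car S) A j" "leq S j m" using d.fin_lub[OF insert.hyps(1) Am insert.prems(2)] by blast
  have xm: "leq S x m" using insert.prems by (simp add: down_def)
  have c: "compat S x j" using d.compat_below[OF xm j(2)] .
  have js: "join_set S A = j" using d.join_set_eq j(1) by blast
  have "is_lub_in S (car S) (insert x A) (join S x j)" using d.lub_insert[OF d.join_lub[OF c] j(1)] .
  then have js2: "join_set S (insert x A) = join S x j" using d.join_set_eq by blast
  have "is_lub_in T (car T) (f ` A) (f j)" using insert js by auto
  then have "is_lub_in T (car T) (insert (f x) (f ` A)) (f (join S x j))" using t.lub_insert fj[OF c] by blast
  then show ?case using js2 by simp
qed


context isg begin
lemma lub_zer: "a \<in> C \<Longrightarrow> is_lub_in S C {z, a} a"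
  by (rule lubI) auto
lemma dom_mul_le: assumes "s \<in> C" "a \<in> C" shows "leq S (dom S (s \<cdot> a)) (dom S a)"
proof -
  have "dom S (s \<cdot> a) = iv a \<cdot> (dom S s \<cdot> a)" using assms by (simp add: dom_eq)
  moreover have "idem S (iv a \<cdot> (dom S s \<cdot> a))" using assms by simp
  moreover have "iv a \<cdot> (dom S s \<cdot> a) \<cdot> dom S a = iv a \<cdot> (dom S s \<cdot> a)" using assms by (simp add: dom_eq)
  ultimately show ?thesis using idem_leq assms by simp
qed
end

context disg begin

lemma lub_Idem: assumes "idem S e" "idem S f" shows "is_lub_in S (Idem S) {e, f} (join S e f)"
proof (rule lubI)
  have c: "compat S e f" using idem_compat assms by blast
  show "join S e f \<in> Idem S" using join_idem assms by (simp add: Idem_def)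
  show "\<And>a. a \<in> {e, f} \<Longrightarrow> leq S a (join S e f)" using join_ub1 join_ub2 c by blast
  show "\<And>y. y \<in> Idem S \<Longrightarrow> (\<And>a. a \<in> {e, f} \<Longrightarrow> leq S a y) \<Longrightarrow> leq S (join S e f) y"
    using join_least c by blast
qed

lemma Edist: assumes "idem S e" "idem S f" "idem S g"
  shows "Emeet S e (Ejoin S f g) = Ejoin S (Emeet S e f) (Emeet S e g)"
proof -
  have c: "compat S f g" using idem_compat assms by blast
  have "Emeet S e (Ejoin S f g) = e \<cdot> join S f g" using assms Ejoin_join join_idem by simp
  also have "\<dots> = join S (e \<cdot> f) (e \<cdot> g)" using dist_l c assms idem_in by blast
  also have "\<dots> = Ejoin S (Emeet S e f) (Emeet S e g)" using assms Ejoin_join by simp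
  finally show ?thesis .
qed

lemma idem_below_join: assumes "idem S x" "idem S e" "idem S f" "leq S x (join S e f)"
  shows "x = join S (x \<cdot> e) (x \<cdot> f)"
proof -
  have c: "compat S e f" using idem_compat assms by blast
  have "x = x \<cdot> join S e f" using idem_leq assms join_idem by blast
  also have "\<dots> = join S (x \<cdot> e) (x \<cdot> f)" using dist_l c assms idem_in by blast
  finally show ?thesis .
qed

end

locale bisg = disg +
  assumes BOOL: "boolean_isg S"
begin

lemma GB: "gen_boolean_idem S" using BOOL boolean_isg_def by blast

lemma ecompl_ex: assumes "idem S e" "idem S f" "leq S f e"
  shows "\<exists>g. idem S g \<and> leq S g e \<and> f \<cdot> g = z \<and> join S f g = e"
proof -
  obtain g where g: "g \<in> Idem S" "leq S g e" "Emeet S f g = z" "Ejoin S f g = e"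
    using GB assms unfolding gen_boolean_idem_def Idem_def by blast
  have gi: "idem S g" using g(1) by (simp add: Idem_def)
  show ?thesis using g gi assms Ejoin_join by auto
qed

lemma ecompl_uniq: assumes "idem S e" "idem S f" "idem S g" "idem S g'"
  "leq S g e" "f \<cdot> g = z" "join S f g = e" "leq S g' e" "f \<cdot> g' = z" "join S f g' = e"
  shows "g = g'"
proof -
  have le: "leq S g g'" if "idem S g" "idem S g'" "leq S g e" "f \<cdot> g = z" "join S f g' = e" for g g'
  proof -
    have c: "compat S f g'" using idem_compat assms that by blast
    have gf: "g \<cdot> f = z" using idem_comm[OF that(1) assms(2)] that(4) by simp
    have "g = g \<cdot> e" using idem_leq that assms by blast
    also have "\<dots> = join S (g \<cdot> f) (g \<cdot> g')" using that(5) dist_l[OF c] that idem_in by metis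
    also have "\<dots> = g \<cdot> g'" using gf that idem_in by simp
    finally show ?thesis using idem_leq that by blast
  qed
  show ?thesis using le[of g g'] le[of g' g] assms leq_antisym by blast
qed

lemma ecompl_props: assumes "idem S e" "idem S f" "leq S f e"
  shows "idem S (ecompl S e f) \<and> leq S (ecompl S e f) e \<and> f \<cdot> ecompl S e f = z \<and> join S f (ecompl S e f) = e"
proof -
  obtain g where g: "idem S g" "leq S g e" "f \<cdot> g = z" "join S f g = e" using ecompl_ex assms by blast
  have "ecompl S e f = g"
    unfolding ecompl_def
  proof (rule the_equality)
    show "g \<in> Idem S \<and> leq S g e \<and> Emeet S f g = z \<and> Ejoin S f g = e"
      using g assms Ejoin_join by (simp add: Idem_def)
    fix g' assume h: "g' \<in> Idem S \<and> leq S g' e \<and> Emeet S f g' = z \<and> Ejoin S f g' = e"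
    then have g': "idem S g'" by (simp add: Idem_def)
    then have "f \<cdot> g' = z" "join S f g' = e" using h assms Ejoin_join by auto
    then show "g' = g" using ecompl_uniq[OF assms(1,2) g' g(1)] h g by blast
  qed
  then show ?thesis using g by simp
qed

definition dif where "dif e f = ecompl S e (e \<cdot> f)"

lemma dif_props: assumes "idem S e" "idem S f"
  shows "idem S (dif e f)" "leq S (dif e f) e" "dif e f \<cdot> f = z" "join S (e \<cdot> f) (dif e f) = e"
proof -
  have ef: "idem S (e \<cdot> f)" "leq S (e \<cdot> f) e" using assms idem_leq_mul1 by auto
  note P = ecompl_props[OF assms(1) ef(1) ef(2), folded dif_def]
  show "idem S (dif e f)" "leq S (dif e f) e" "join S (e \<cdot> f) (dif e f) = e" using P by blast+
  have fC: "f \<in> C" "e \<in> C" using assms idem_in by blast+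
  have dC: "dif e f \<in> C" using P idem_in by blast
  have "dif e f = dif e f \<cdot> e" using P idem_leq assms by blast
  then have "dif e f \<cdot> f = dif e f \<cdot> (e \<cdot> f)" using fC dC by (metis assoc)
  also have "\<dots> = (e \<cdot> f) \<cdot> dif e f" using idem_comm P ef by blast
  also have "\<dots> = z" using P by blast
  finally show "dif e f \<cdot> f = z" .
qed

lemma dif_idem[simp]: "idem S e \<Longrightarrow> idem S f \<Longrightarrow> idem S (dif e f)" using dif_props by blast
lemma dif_in[simp]: "idem S e \<Longrightarrow> idem S f \<Longrightarrow> dif e f \<in> C" using dif_props idem_in by blast

lemma dif_char: assumes "idem S x" "idem S e" "idem S f"
  shows "leq S x (dif e f) \<longleftrightarrow> leq S x e \<and> x \<cdot> f = z"
proof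
  assume h: "leq S x (dif e f)"
  then have "leq S x e" using dif_props assms leq_trans by blast
  moreover have "x \<cdot> f = z"
  proof -
    have "x = x \<cdot> dif e f" using h idem_leq assms by simp
    then have "x \<cdot> f = x \<cdot> (dif e f \<cdot> f)" using assms idem_in by (metis assoc dif_in)
    then show ?thesis using dif_props assms idem_in by simp
  qed
  ultimately show "leq S x e \<and> x \<cdot> f = z" ..
next
  assume h: "leq S x e \<and> x \<cdot> f = z"
  have C: "x \<in> C" "e \<in> C" "f \<in> C" using assms idem_in by blast+
  have c: "compat S (e \<cdot> f) (dif e f)" using idem_compat assms by simp
  have "x = x \<cdot> e" using h idem_leq assms by blast
  also have "\<dots> = x \<cdot> join S (e \<cdot> f) (dif e f)" using dif_props assms by simp
  also have "\<dots> = join S (x \<cdot> (e \<cdot> f)) (x \<cdot> dif e f)" using dist_l[OF c] C by simp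
  also have "x \<cdot> (e \<cdot> f) = z"
  proof -
    have "x \<cdot> (e \<cdot> f) = (x \<cdot> e) \<cdot> f" using C by simp
    also have "\<dots> = x \<cdot> f" using `x = x \<cdot> e` by simp
    finally show ?thesis using h by simp
  qed
  also have "join S z (x \<cdot> dif e f) = x \<cdot> dif e f" using C assms by simp
  finally show "leq S x (dif e f)" using idem_leq assms by simp
qed

lemma dif_leqI: "idem S x \<Longrightarrow> idem S e \<Longrightarrow> idem S f \<Longrightarrow> leq S x e \<Longrightarrow> x \<cdot> f = z \<Longrightarrow> leq S x (dif e f)"
  using dif_char by blast

lemma dif_self: assumes "idem S e" shows "dif e e = z"
proof -
  have "leq S (dif e e) e" "dif e e \<cdot> e = z" using dif_props assms by blast+
  moreover have "dif e e = dif e e \<cdot> e" using calculation idem_leq assms by simp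
  ultimately show ?thesis by simp
qed

lemma dif_zer: assumes "idem S e" shows "dif e z = e"
proof -
  have "leq S e (dif e z)" using dif_char[OF assms assms idem_zer] assms idem_in by simp
  moreover have "leq S (dif e z) e" using dif_props assms by simp
  ultimately show ?thesis using leq_antisym by blast
qed

lemma dif_ortho: "idem S e \<Longrightarrow> idem S f \<Longrightarrow> f \<cdot> dif e f = z"
  using dif_props idem_comm by (metis dif_idem)

lemma dif_split: assumes "idem S x" "idem S f" shows "x = join S (x \<cdot> f) (dif x f)"
  using dif_props assms by simp

lemma bdiff_eq: assumes "leq S b a" shows "bdiff S a b = a \<cdot> dif (dom S a) (dom S b)"
proof -
  have C: "a \<in> C" "b \<in> C" using assms leq_C1 leq_C2 by blast+
  have "dom S a \<cdot> dom S b = dom S b" using dom_mono[OF assms] idem_leq' C by simp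
  then show ?thesis unfolding bdiff_def dif_def by simp
qed

lemma bdiff_leq: assumes "leq S b a" shows "leq S (bdiff S a b) a"
  using bdiff_eq[OF assms] leq_right assms leq_C1 leq_C2 by (metis dif_idem dom_idem)

lemma bdiff_in[simp]: "leq S b a \<Longrightarrow> bdiff S a b \<in> C"
  using bdiff_leq leq_C1 by blast

lemma dom_bdiff: assumes "leq S b a" shows "dom S (bdiff S a b) = dif (dom S a) (dom S b)"
proof -
  have C: "a \<in> C" "b \<in> C" using assms leq_C1 leq_C2 by blast+
  have g: "idem S (dif (dom S a) (dom S b))" using C by simp
  have "dom S (bdiff S a b) = dom S a \<cdot> dif (dom S a) (dom S b)" using bdiff_eq[OF assms] dom_mul_idem C g by simp
  also have "\<dots> = dif (dom S a) (dom S b)" using dif_props[of "dom S a" "dom S b"] C idem_leq' g by simp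
  finally show ?thesis .
qed

lemma bdiff_join: assumes "leq S b a" shows "join S b (bdiff S a b) = a"
proof -
  have C: "a \<in> C" "b \<in> C" using assms leq_C1 leq_C2 by blast+
  have g: "idem S (dif (dom S a) (dom S b))" using C by simp
  have c: "compat S (dom S b) (dif (dom S a) (dom S b))" using idem_compat C g by simp
  have db: "dom S a \<cdot> dom S b = dom S b" using dom_mono[OF assms] idem_leq' C by simp
  have "join S b (bdiff S a b) = join S (a \<cdot> dom S b) (a \<cdot> dif (dom S a) (dom S b))"
    using bdiff_eq[OF assms] leqD[OF assms] by simp
  also have "\<dots> = a \<cdot> join S (dom S b) (dif (dom S a) (dom S b))" using dist_l[OF c] C by simp
  also have "\<dots> = a \<cdot> dom S a" using dif_props[of "dom S a" "dom S b"] C db by simp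
  finally show ?thesis using C by simp
qed

lemma bdiff_self[simp]: "a \<in> C \<Longrightarrow> bdiff S a a = z"
  using bdiff_eq[of a a] dif_self by simp

lemma bdiff_zer[simp]: "a \<in> C \<Longrightarrow> bdiff S a z = a"
  using bdiff_eq[of z a] dif_zer by simp

end


context bisg begin

lemma dif_join_le: assumes "idem S e" "idem S f" "idem S g" "idem S h"
  shows "leq S (dif (join S e f) (join S g h)) (join S (dif e g) (dif f h))"
proof -
  have cef: "compat S e f" and cgh: "compat S g h" using idem_compat assms by blast+
  have jef: "idem S (join S e f)" and jgh: "idem S (join S g h)" using join_idem assms by blast+
  define x where "x = dif (join S e f) (join S g h)"
  have x: "idem S x" using jef jgh x_def by simp
  have xC: "x \<in> C" using x idem_in by blast
  have C: "e \<in> C" "f \<in> C" "g \<in> C" "h \<in> C" using assms idem_in by blast+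
  have xj: "x \<cdot> join S g h = z" using dif_props[OF jef jgh] x_def by blast
  have xle: "leq S x (join S e f)" using dif_props[OF jef jgh] x_def by blast
  have gle: "g = join S g h \<cdot> g" using join_ub1[OF cgh] idem_leq' assms jgh by blast
  have hle: "h = join S g h \<cdot> h" using join_ub2[OF cgh] idem_leq' assms jgh by blast
  have xg: "x \<cdot> g = z"
  proof -
    have "x \<cdot> g = x \<cdot> (join S g h \<cdot> g)" using gle by simp
    also have "\<dots> = (x \<cdot> join S g h) \<cdot> g" using xC C cgh by simp
    finally show ?thesis using xj C by simp
  qed
  have xh: "x \<cdot> h = z"
  proof -
    have "x \<cdot> h = x \<cdot> (join S g h \<cdot> h)" using hle by simp
    also have "\<dots> = (x \<cdot> join S g h) \<cdot> h" using xC C cgh by simp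
    finally show ?thesis using xj C by simp
  qed
  have xs: "x = join S (x \<cdot> e) (x \<cdot> f)" using idem_below_join[OF x assms(1,2) xle] .
  have 1: "leq S (x \<cdot> e) (dif e g)"
  proof (rule dif_leqI)
    show "idem S (x \<cdot> e)" using x assms by simp
    show "leq S (x \<cdot> e) e" using idem_leq_mul2 x assms by blast
    have "x \<cdot> e \<cdot> g = x \<cdot> (g \<cdot> e)" using idem_comm assms xC C by simp
    also have "\<dots> = z" using xg xC C by (metis assoc zl)
    finally show "x \<cdot> e \<cdot> g = z" .
  qed (use assms in auto)
  have 2: "leq S (x \<cdot> f) (dif f h)"
  proof (rule dif_leqI)
    show "idem S (x \<cdot> f)" using x assms by simp
    show "leq S (x \<cdot> f) f" using idem_leq_mul2 x assms by blast
    have "x \<cdot> f \<cdot> h = x \<cdot> (h \<cdot> f)" using idem_comm assms xC C by simp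
    also have "\<dots> = z" using xh xC C by (metis assoc zl)
    finally show "x \<cdot> f \<cdot> h = z" .
  qed (use assms in auto)
  have "leq S (join S (x \<cdot> e) (x \<cdot> f)) (join S (dif e g) (dif f h))"
    using join_mono[OF _ _ 1 2] idem_compat x assms by simp
  then show ?thesis using xs x_def by simp
qed

end

locale bq = bisg +
  fixes I
  assumes AI: "additive_ideal S I" and zI: "z \<in> I"
begin

abbreviation E where "E \<equiv> eps S I"

lemma I_C: "x \<in> I \<Longrightarrow> x \<in> C" using AI unfolding additive_ideal_def by blast
lemma I_ml: "s \<in> C \<Longrightarrow> x \<in> I \<Longrightarrow> s \<cdot> x \<in> I" using AI unfolding additive_ideal_def by blast
lemma I_mr: "s \<in> C \<Longrightarrow> x \<in> I \<Longrightarrow> x \<cdot> s \<in> I" using AI unfolding additive_ideal_def by blast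
lemma I_join: "compat S x y \<Longrightarrow> x \<in> I \<Longrightarrow> y \<in> I \<Longrightarrow> join S x y \<in> I" using AI unfolding additive_ideal_def by blast
lemma I_down: "leq S x y \<Longrightarrow> y \<in> I \<Longrightarrow> x \<in> I"
  using leqD[of x y] I_mr[of "dom S x" y] by simp
lemma I_inv: assumes "x \<in> I" shows "iv x \<in> I"
proof -
  have xC: "x \<in> C" using I_C assms by blast
  have "x \<cdot> iv x \<in> I" using I_mr xC assms by simp
  then have "iv x \<cdot> (x \<cdot> iv x) \<in> I" using I_ml[OF inv_in[OF xC]] by blast
  then show ?thesis using xC by simp
qed
lemma I_under: "leq S x (join S p q) \<Longrightarrow> compat S p q \<Longrightarrow> p \<in> I \<Longrightarrow> q \<in> I \<Longrightarrow> x \<in> I"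
  using I_join I_down by blast

lemma eps_iff: "(a, b) \<in> E \<longleftrightarrow> a \<in> C \<and> b \<in> C \<and> (\<exists>c\<in>C. leq S c a \<and> leq S c b \<and> bdiff S a c \<in> I \<and> bdiff S b c \<in> I)"
  unfolding eps_def by blast

lemma epsI: "leq S c a \<Longrightarrow> leq S c b \<Longrightarrow> bdiff S a c \<in> I \<Longrightarrow> bdiff S b c \<in> I \<Longrightarrow> (a, b) \<in> E"
  unfolding eps_iff using leq_C1 leq_C2 by blast

lemma epsE: assumes "(a, b) \<in> E"
  obtains c where "leq S c a" "leq S c b" "bdiff S a c \<in> I" "bdiff S b c \<in> I"
  using assms unfolding eps_iff by blast

lemma eps_C: "(a, b) \<in> E \<Longrightarrow> a \<in> C \<and> b \<in> C" unfolding eps_iff by blast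

lemma eps_refl: "a \<in> C \<Longrightarrow> (a, a) \<in> E"
  using epsI[of a a a] zI by simp

lemma eps_sym: "(a, b) \<in> E \<Longrightarrow> (b, a) \<in> E"
  unfolding eps_iff by blast

lemma trans_half: assumes "leq S c a" "leq S c b" "leq S c' b" "bdiff S a c \<in> I" "bdiff S b c' \<in> I"
  shows "bdiff S a (c \<cdot> dom S c') \<in> I"
proof -
  have C: "a \<in> C" "b \<in> C" "c \<in> C" "c' \<in> C" using assms leq_C1 leq_C2 by blast+
  define c'' where "c'' = c \<cdot> dom S c'"
  have c''c: "leq S c'' c" using leq_right C c''_def by simp
  have c''a: "leq S c'' a" using leq_trans[OF c''c assms(1)] .
  define u1 where "u1 = bdiff S a c"
  define g where "g = dif (dom S c) (dom S c')"
  have g: "idem S g" using C g_def by simp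
  define u2 where "u2 = c \<cdot> g"
  have u1a: "leq S u1 a" using bdiff_leq assms u1_def by blast
  have u2c: "leq S u2 c" using leq_right C g u2_def by simp
  have u2a: "leq S u2 a" using leq_trans[OF u2c assms(1)] .
  have cu: "compat S u1 u2" using compat_below[OF u1a u2a] .
  have d1: "dom S u1 = dif (dom S a) (dom S c)" using dom_bdiff assms u1_def by blast
  have gdc: "leq S g (dom S c)" using dif_props C g_def by simp
  have d2: "dom S u2 = g"
  proof -
    have "dom S u2 = dom S c \<cdot> g" using dom_mul_idem C g u2_def by simp
    also have "\<dots> = g" using gdc idem_leq' g C by simp
    finally show ?thesis .
  qed
  have dm: "dom S (join S u1 u2) = join S (dif (dom S a) (dom S c)) g" using dom_join[OF cu] d1 d2 by simp
  have dc'': "dom S c'' = dom S c \<cdot> dom S c'" using dom_mul_idem C c''_def by simp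
  have dca: "leq S (dom S c) (dom S a)" using dom_mono assms by blast
  define x where "x = dif (dom S a) (dom S c'')"
  have x: "idem S x" using x_def C c''c leq_C1 by simp
  have xC: "x \<in> C" using x idem_in by blast
  have Cd: "dom S a \<in> C" "dom S c \<in> C" "dom S c' \<in> C" using C by simp_all
  have xdc: "x \<cdot> (dom S c \<cdot> dom S c') = z" using dif_props[of "dom S a" "dom S c''"] x_def dc'' C c''c leq_C1 by simp
  have xsplit: "x = join S (x \<cdot> dom S c) (dif x (dom S c))" using dif_split x C by simp
  have 1: "leq S (x \<cdot> dom S c) g"
    unfolding g_def
  proof (rule dif_leqI)
    show "idem S (x \<cdot> dom S c)" using x C by simp
    show "leq S (x \<cdot> dom S c) (dom S c)" using idem_leq_mul2 x C by simp
    show "x \<cdot> dom S c \<cdot> dom S c' = z" using xdc xC Cd by simp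
  qed (use C in auto)
  have xa: "leq S x (dom S a)" using dif_props x_def C c''c leq_C1 by simp
  have 2: "leq S (dif x (dom S c)) (dif (dom S a) (dom S c))"
  proof (rule dif_leqI)
    show "idem S (dif x (dom S c))" using x C by simp
    show "leq S (dif x (dom S c)) (dom S a)" using leq_trans[OF _ xa] dif_props x C by simp
    show "dif x (dom S c) \<cdot> dom S c = z" using dif_props x C by simp
  qed (use C in auto)
  have "leq S x (join S g (dif (dom S a) (dom S c)))"
    using join_mono[OF _ _ 1 2] idem_compat x g C xsplit by simp
  then have 3: "leq S (dom S (bdiff S a c'')) (dom S (join S u1 u2))"
    using dom_bdiff[OF c''a] dm x_def join_comm by simp
  have jua: "leq S (join S u1 u2) a" using join_least[OF cu u1a u2a] .
  have 4: "leq S (bdiff S a c'') (join S u1 u2)"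
    using leq_common[OF bdiff_leq[OF c''a] jua] 3 by blast
  have u1I: "u1 \<in> I" using assms u1_def by simp
  have cb: "leq S c b" by fact
  have u2I: "u2 \<in> I"
  proof -
    have bb: "leq S (bdiff S b c') b" using bdiff_leq assms by blast
    have u2b: "leq S u2 b" using leq_trans[OF u2c cb] .
    have dcb: "leq S (dom S c) (dom S b)" using dom_mono cb by blast
    have "leq S g (dif (dom S b) (dom S c'))"
    proof (rule dif_leqI)
      show "leq S g (dom S b)" using leq_trans[OF gdc dcb] .
      show "g \<cdot> dom S c' = z" using dif_props C g_def by simp
    qed (use g C in auto)
    then have "leq S (dom S u2) (dom S (bdiff S b c'))" using d2 dom_bdiff assms by simp
    then have "leq S u2 (bdiff S b c')" using leq_common[OF u2b bb] by blast
    then show ?thesis using I_down assms by blast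
  qed
  show ?thesis using I_under[OF 4 cu u1I u2I] c''_def by simp
qed

lemma eps_trans: assumes "(a, b) \<in> E" "(b, d) \<in> E" shows "(a, d) \<in> E"
proof -
  obtain c where c: "leq S c a" "leq S c b" "bdiff S a c \<in> I" "bdiff S b c \<in> I" using epsE assms(1) by blast
  obtain c' where c': "leq S c' b" "leq S c' d" "bdiff S b c' \<in> I" "bdiff S d c' \<in> I" using epsE assms(2) by blast
  have cc: "compat S c c'" using compat_below c c' by blast
  have eq: "c \<cdot> dom S c' = c' \<cdot> dom S c" using compat_dom[OF cc] .
  have C: "c \<in> C" "c' \<in> C" using c c' leq_C1 by blast+
  have 1: "leq S (c \<cdot> dom S c') a" using leq_trans[OF leq_right c(1)] C by simp
  have 2: "leq S (c \<cdot> dom S c') d" using leq_trans[OF leq_right c'(2)] C eq by simp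
  have 3: "bdiff S a (c \<cdot> dom S c') \<in> I" using trans_half[OF c(1,2) c'(1) c(3) c'(3)] .
  have 4: "bdiff S d (c \<cdot> dom S c') \<in> I" using trans_half[OF c'(2,1) c(2) c'(4) c(4)] eq by simp
  show ?thesis using epsI[OF 1 2 3 4] .
qed

lemma mul_half: assumes "leq S c a" "bdiff S a c \<in> I" "s \<in> C"
  shows "bdiff S (s \<cdot> a) (s \<cdot> c) \<in> I"
proof -
  have C: "a \<in> C" "c \<in> C" using assms leq_C1 leq_C2 by blast+
  have sc: "leq S (s \<cdot> c) (s \<cdot> a)" using leq_mul_left assms by blast
  have b1: "leq S (bdiff S (s \<cdot> a) (s \<cdot> c)) (s \<cdot> a)" using bdiff_leq sc by blast
  have b2: "leq S (s \<cdot> bdiff S a c) (s \<cdot> a)" using leq_mul_left bdiff_leq assms by blast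
  define g where "g = dif (dom S a) (dom S c)"
  have g: "idem S g" using g_def C by simp
  have bd: "bdiff S a c = a \<cdot> g" using bdiff_eq assms g_def by simp
  have sa: "s \<cdot> a \<in> C" using assms C by simp
  have d2: "dom S (s \<cdot> bdiff S a c) = dom S (s \<cdot> a) \<cdot> g" using dom_mul_idem[OF sa g] bd assms C g idem_in by simp
  have cc: "c = a \<cdot> dom S c" using leqD assms by blast
  have dsc: "dom S (s \<cdot> c) = dom S (s \<cdot> a) \<cdot> dom S c"
  proof -
    have "s \<cdot> c = (s \<cdot> a) \<cdot> dom S c" using cc assms C by (metis assoc dom_in)
    then show ?thesis using dom_mul_idem[OF sa] C by simp
  qed
  define x where "x = dif (dom S (s \<cdot> a)) (dom S (s \<cdot> c))"
  have x: "idem S x" using x_def sa assms C by simp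
  have xC: "x \<in> C" using x idem_in by blast
  have xle: "leq S x (dom S (s \<cdot> a))" using dif_props x_def sa assms C by simp
  have xz: "x \<cdot> (dom S (s \<cdot> a) \<cdot> dom S c) = z" using dif_props[of "dom S (s \<cdot> a)" "dom S (s \<cdot> c)"] x_def sa assms C dsc by simp
  have xx: "x = x \<cdot> dom S (s \<cdot> a)" using xle idem_leq x sa by simp
  have xdc: "x \<cdot> dom S c = z"
  proof -
    have "x \<cdot> dom S c = x \<cdot> dom S (s \<cdot> a) \<cdot> dom S c" using xx by simp
    also have "\<dots> = z" using xz xC sa C by simp
    finally show ?thesis .
  qed
  have dsa: "leq S (dom S (s \<cdot> a)) (dom S a)" using dom_mul_le assms C by blast
  have xg: "leq S x g" unfolding g_def
    using dif_leqI[OF x _ _ leq_trans[OF xle dsa] xdc] C by simp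
  have "leq S x (dom S (s \<cdot> a) \<cdot> g)" using leq_idem_glb[OF x _ g xle xg] sa by simp
  then have "leq S (dom S (bdiff S (s \<cdot> a) (s \<cdot> c))) (dom S (s \<cdot> bdiff S a c))"
    using dom_bdiff[OF sc] x_def d2 by simp
  then have "leq S (bdiff S (s \<cdot> a) (s \<cdot> c)) (s \<cdot> bdiff S a c)" using leq_common[OF b1 b2] by blast
  then show ?thesis using I_down I_ml assms by blast
qed

lemma eps_mul_l: assumes "(a, b) \<in> E" "s \<in> C" shows "(s \<cdot> a, s \<cdot> b) \<in> E"
proof -
  obtain c where c: "leq S c a" "leq S c b" "bdiff S a c \<in> I" "bdiff S b c \<in> I" using epsE assms(1) by blast
  show ?thesis using epsI[OF leq_mul_left[OF c(1) assms(2)] leq_mul_left[OF c(2) assms(2)]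
    mul_half[OF c(1,3) assms(2)] mul_half[OF c(2,4) assms(2)]] .
qed

lemma inv_half: assumes "leq S c a" "bdiff S a c \<in> I"
  shows "bdiff S (iv a) (iv c) \<in> I"
proof -
  have C: "a \<in> C" "c \<in> C" using assms leq_C1 leq_C2 by blast+
  have ci: "leq S (iv c) (iv a)" using leq_inv assms by blast
  define g where "g = dif (dom S a) (dom S c)"
  have g: "idem S g" using g_def C by simp
  have gC: "g \<in> C" using g idem_in by blast
  have bd: "bdiff S a c = a \<cdot> g" using bdiff_eq assms g_def by simp
  have b1: "leq S (bdiff S (iv a) (iv c)) (iv a)" using bdiff_leq ci by blast
  have b2: "leq S (iv (bdiff S a c)) (iv a)" using leq_inv bdiff_leq assms by blast
  have d1: "dom S (bdiff S (iv a) (iv c)) = dif (ran S a) (ran S c)" using dom_bdiff[OF ci] C by simp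
  have d2: "dom S (iv (bdiff S a c)) = a \<cdot> (g \<cdot> iv a)"
  proof -
    have "dom S (iv (bdiff S a c)) = ran S (bdiff S a c)" using dom_inv bdiff_in assms by blast
    also have "\<dots> = a \<cdot> g \<cdot> iv (a \<cdot> g)" using bd by (simp add: ran_eq)
    also have "\<dots> = a \<cdot> (g \<cdot> iv a)" using C g gC by simp
    finally show ?thesis .
  qed
  have cc: "c = a \<cdot> dom S c" using leqD assms by blast
  have dca: "dom S a \<cdot> dom S c = dom S c" using dom_mono[OF assms(1)] idem_leq' C by simp
  have jd: "join S (dom S c) g = dom S a" using dif_props[of "dom S a" "dom S c"] C dca g_def by simp
  have cdg: "compat S (dom S c) g" using idem_compat g C by simp
  have rc: "ran S c = a \<cdot> (dom S c \<cdot> iv a)"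
  proof -
    have "ran S c = a \<cdot> dom S c \<cdot> iv (a \<cdot> dom S c)" using cc by (metis ran_eq)
    also have "\<dots> = a \<cdot> (dom S c \<cdot> iv a)" using C by simp
    finally show ?thesis .
  qed
  have ra: "ran S a = join S (ran S c) (a \<cdot> (g \<cdot> iv a))"
  proof -
    have "ran S a = a \<cdot> (dom S a \<cdot> iv a)" using C by (simp add: ran_eq dom_eq)
    also have "\<dots> = a \<cdot> (join S (dom S c) g \<cdot> iv a)" using jd by simp
    also have "\<dots> = a \<cdot> join S (dom S c \<cdot> iv a) (g \<cdot> iv a)" using dist_r[OF cdg] C by simp
    also have "\<dots> = join S (a \<cdot> (dom S c \<cdot> iv a)) (a \<cdot> (g \<cdot> iv a))"
      using dist_l[OF compat_mul_r[OF cdg]] C by simp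
    finally show ?thesis using rc by simp
  qed
  define x where "x = dif (ran S a) (ran S c)"
  have x: "idem S x" using x_def C by simp
  have xC: "x \<in> C" using x idem_in by blast
  have xra: "x = x \<cdot> ran S a" using dif_props[of "ran S a" "ran S c"] x_def idem_leq C x by simp
  have xrc: "x \<cdot> ran S c = z" using dif_props x_def C by simp
  have cr: "compat S (ran S c) (a \<cdot> (g \<cdot> iv a))" using idem_compat C g by simp
  have "x = join S (x \<cdot> ran S c) (x \<cdot> (a \<cdot> (g \<cdot> iv a)))" using xra ra dist_l[OF cr xC] by simp
  also have "\<dots> = x \<cdot> (a \<cdot> (g \<cdot> iv a))" using xrc xC C gC by simp
  finally have "leq S x (a \<cdot> (g \<cdot> iv a))" using idem_leq x C g by simp
  then have "leq S (dom S (bdiff S (iv a) (iv c))) (dom S (iv (bdiff S a c)))" using d1 d2 x_def by simp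
  then have "leq S (bdiff S (iv a) (iv c)) (iv (bdiff S a c))" using leq_common[OF b1 b2] by blast
  then show ?thesis using I_down I_inv assms by blast
qed

lemma eps_inv: assumes "(a, b) \<in> E" shows "(iv a, iv b) \<in> E"
proof -
  obtain c where c: "leq S c a" "leq S c b" "bdiff S a c \<in> I" "bdiff S b c \<in> I" using epsE assms(1) by blast
  show ?thesis using epsI[OF leq_inv[OF c(1)] leq_inv[OF c(2)] inv_half[OF c(1,3)] inv_half[OF c(2,4)]] .
qed

lemma eps_mul_r: assumes "(a, b) \<in> E" "s \<in> C" shows "(a \<cdot> s, b \<cdot> s) \<in> E"
proof -
  have C: "a \<in> C" "b \<in> C" using eps_C assms by blast+
  have "(iv s \<cdot> iv a, iv s \<cdot> iv b) \<in> E" using eps_mul_l[OF eps_inv[OF assms(1)]] assms by simp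
  then have "(iv (iv s \<cdot> iv a), iv (iv s \<cdot> iv b)) \<in> E" by (rule eps_inv)
  then show ?thesis using C assms by simp
qed

lemma eps_cong: assumes "(a, a') \<in> E" "(b, b') \<in> E" shows "(a \<cdot> b, a' \<cdot> b') \<in> E"
proof -
  have C: "a' \<in> C" "b \<in> C" using eps_C assms by blast+
  show ?thesis using eps_trans[OF eps_mul_r[OF assms(1) C(2)] eps_mul_l[OF assms(2) C(1)]] .
qed

lemma eps_equiv: "equiv C E"
proof (rule equivI)
  show "E \<subseteq> C \<times> C" using eps_C by auto
  show "refl_on C E" by (rule refl_onI) (use eps_refl in blast)
  show "sym E" unfolding sym_def using eps_sym by blast
  show "trans E" unfolding trans_def using eps_trans by blast
qed

lemma join_half: assumes "compat S x y" "leq S c x" "leq S c' y" "bdiff S x c \<in> I" "bdiff S y c' \<in> I"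
  shows "compat S c c'" "bdiff S (join S x y) (join S c c') \<in> I"
proof -
  have C: "x \<in> C" "y \<in> C" "c \<in> C" "c' \<in> C" using assms leq_C1 leq_C2 by blast+
  have "compat S c y" using compat_down assms by blast
  then have "compat S c' c" using compat_down[OF assms(3) compat_sym] by blast
  then show cc: "compat S c c'" using compat_sym by blast
  define m where "m = join S x y"
  have xm: "leq S x m" "leq S y m" using join_ub1 join_ub2 assms m_def by blast+
  have wm: "leq S (join S c c') m" using join_mono[OF cc assms(1,2,3)] m_def by simp
  have u1: "leq S (bdiff S x c) m" using leq_trans[OF bdiff_leq xm(1)] assms by blast
  have u2: "leq S (bdiff S y c') m" using leq_trans[OF bdiff_leq xm(2)] assms by blast
  have cu: "compat S (bdiff S x c) (bdiff S y c')" using compat_below[OF u1 u2] .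
  have ju: "leq S (join S (bdiff S x c) (bdiff S y c')) m" using join_least[OF cu u1 u2] .
  have "dom S (bdiff S m (join S c c')) = dif (join S (dom S x) (dom S y)) (join S (dom S c) (dom S c'))"
    using dom_bdiff[OF wm] dom_join assms(1) cc m_def by simp
  moreover have "dom S (join S (bdiff S x c) (bdiff S y c')) = join S (dif (dom S x) (dom S c)) (dif (dom S y) (dom S c'))"
    using dom_join[OF cu] dom_bdiff assms by simp
  ultimately have "leq S (dom S (bdiff S m (join S c c'))) (dom S (join S (bdiff S x c) (bdiff S y c')))"
    using dif_join_le C by simp
  then have "leq S (bdiff S m (join S c c')) (join S (bdiff S x c) (bdiff S y c'))"
    using leq_common[OF bdiff_leq[OF wm] ju] by blast
  then show "bdiff S (join S x y) (join S c c') \<in> I" using I_under cu assms m_def by blast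
qed

lemma eps_join: assumes "compat S x y" "compat S x' y'" "(x, x') \<in> E" "(y, y') \<in> E"
  shows "(join S x y, join S x' y') \<in> E"
proof -
  obtain c where c: "leq S c x" "leq S c x'" "bdiff S x c \<in> I" "bdiff S x' c \<in> I" using epsE assms(3) by blast
  obtain c' where c': "leq S c' y" "leq S c' y'" "bdiff S y c' \<in> I" "bdiff S y' c' \<in> I" using epsE assms(4) by blast
  note h1 = join_half[OF assms(1) c(1) c'(1) c(3) c'(3)]
  note h2 = join_half[OF assms(2) c(2) c'(2) c(4) c'(4)]
  show ?thesis using epsI[OF join_mono[OF h1(1) assms(1) c(1) c'(1)] join_mono[OF h1(1) assms(2) c(2) c'(2)] h1(2) h2(2)] .
qed

lemma lift_idem: assumes "a \<in> C" "(a \<cdot> a, a) \<in> E" shows "\<exists>e. idem S e \<and> (a, e) \<in> E"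
proof -
  obtain c where c: "leq S c (a \<cdot> a)" "leq S c a" "bdiff S (a \<cdot> a) c \<in> I" "bdiff S a c \<in> I" using epsE assms(2) by blast
  have cC: "c \<in> C" using c leq_C1 by blast
  have c1: "c = a \<cdot> dom S c" using leqD c(2) by blast
  have c2: "c = a \<cdot> a \<cdot> dom S c" using leqD c(1) by blast
  have cac: "c = a \<cdot> c" using c1 c2 assms cC by (metis assoc dom_in)
  have "ran S c = a \<cdot> ran S c" using cac assms cC by (metis assoc inv_in ran_eq)
  then have rca: "leq S (ran S c) a" using leq_rightI[of a "ran S c" "ran S c"] assms cC by simp
  have "c = ran S c \<cdot> a" using leq_ran c(2) by blast
  moreover have "ran S c = ran S c \<cdot> a" using leq_ran[OF rca] cC by simp
  ultimately have "c = ran S c" by simp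
  then have ci: "idem S c" using cC by (metis ran_idem)
  have "(a, c) \<in> E" using epsI[OF c(2) leq_refl[OF cC] c(4)] cC zI by simp
  then show ?thesis using ci by blast
qed

end


lemma uniq_inv_generic:
  fixes m :: "'x \<Rightarrow> 'x \<Rightarrow> 'x" and A :: "'x set"
  assumes cl: "\<And>a b. a \<in> A \<Longrightarrow> b \<in> A \<Longrightarrow> m a b \<in> A"
    and as: "\<And>a b c. a \<in> A \<Longrightarrow> b \<in> A \<Longrightarrow> c \<in> A \<Longrightarrow> m (m a b) c = m a (m b c)"
    and ic: "\<And>p q. p \<in> A \<Longrightarrow> q \<in> A \<Longrightarrow> m p p = p \<Longrightarrow> m q q = q \<Longrightarrow> m p q = m q p"
    and x: "x \<in> A" and y: "y \<in> A" and y': "y' \<in> A"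
    and h1: "m (m x y) x = x" "m (m y x) y = y" and h2: "m (m x y') x = x" "m (m y' x) y' = y'"
  shows "y = y'"
proof -
  have yx: "m (m y x) (m y x) = m y x" using h1 x y cl as by metis
  have y'x: "m (m y' x) (m y' x) = m y' x" using h2 x y' cl as by metis
  have xy: "m (m x y) (m x y) = m x y" using h1 x y cl as by metis
  have xy': "m (m x y') (m x y') = m x y'" using h2 x y' cl as by metis
  have c1: "m (m y x) (m y' x) = m (m y' x) (m y x)" using ic yx y'x cl x y y' by blast
  have c2: "m (m x y) (m x y') = m (m x y') (m x y)" using ic xy xy' cl x y y' by blast
  have "y = m (m y x) y" using h1 by simp
  also have "\<dots> = m (m y (m (m x y') x)) y" using h2 by simp
  also have "\<dots> = m (m (m y x) (m y' x)) y" using as cl x y y' by simp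
  also have "\<dots> = m (m (m y' x) (m y x)) y" using c1 by simp
  also have "\<dots> = m y' (m x (m (m y x) y))" using as cl x y y' by simp
  also have "\<dots> = m y' (m x y)" using h1 by simp
  finally have 1: "y = m y' (m x y)" .
  have "y' = m (m y' x) y'" using h2 by simp
  also have "\<dots> = m (m y' (m (m x y) x)) y'" using h1 by simp
  also have "\<dots> = m y' (m (m x y) (m x y'))" using as cl x y y' by simp
  also have "\<dots> = m y' (m (m x y') (m x y))" using c2 by simp
  also have "\<dots> = m (m (m y' x) y') (m x y)" using as cl x y y' by simp
  also have "\<dots> = m y' (m x y)" using h2 by simp
  finally show ?thesis using 1 by simp
qed

context bq begin

abbreviation Q where "Q \<equiv> quot_isg S E"
abbreviation cl where "cl x \<equiv> E `` {x}"

lemma Q_car: "car Q = C // E" by (simp add: quot_isg_def)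
lemma Q_zer: "zer Q = cl z" by (simp add: quot_isg_def)
lemma Q_mul: "mul Q X Y = cl ((SOME x. x \<in> X) \<cdot> (SOME y. y \<in> Y))" by (simp add: quot_isg_def)

lemma cl_in[simp]: "a \<in> C \<Longrightarrow> cl a \<in> car Q" using Q_car quotientI by metis
lemma cl_surj: "X \<in> car Q \<Longrightarrow> \<exists>a\<in>C. X = cl a" using Q_car quotientE by metis
lemma cl_eq: "a \<in> C \<Longrightarrow> b \<in> C \<Longrightarrow> cl a = cl b \<longleftrightarrow> (a, b) \<in> E"
  using eq_equiv_class_iff[OF eps_equiv] by blast

lemma some_rep: assumes "a \<in> C" shows "(SOME x. x \<in> cl a) \<in> C" "((SOME x. x \<in> cl a), a) \<in> E"
proof -
  have "a \<in> cl a" using equiv_class_self[OF eps_equiv assms] .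
  then have "(SOME x. x \<in> cl a) \<in> cl a" by (rule someI)
  then have "(a, SOME x. x \<in> cl a) \<in> E" by simp
  then show "(SOME x. x \<in> cl a) \<in> C" "((SOME x. x \<in> cl a), a) \<in> E" using eps_sym eps_C by blast+
qed

lemma cl_mul[simp]: assumes "a \<in> C" "b \<in> C" shows "mul Q (cl a) (cl b) = cl (a \<cdot> b)"
proof -
  have "((SOME x. x \<in> cl a) \<cdot> (SOME x. x \<in> cl b), a \<cdot> b) \<in> E"
    using eps_cong some_rep assms by blast
  then show ?thesis using Q_mul cl_eq some_rep assms by simp
qed

lemma Q_idem_lift: assumes "P \<in> car Q" "mul Q P P = P" shows "\<exists>e. idem S e \<and> P = cl e"
proof -
  obtain x where x: "x \<in> C" "P = cl x" using cl_surj assms by blast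
  have "cl (x \<cdot> x) = cl x" using assms x by simp
  then have "(x \<cdot> x, x) \<in> E" using cl_eq x by simp
  then obtain e where e: "idem S e" "(x, e) \<in> E" using lift_idem x by blast
  then have "cl x = cl e" using cl_eq x idem_in by blast
  then show ?thesis using e x by blast
qed

lemma Q_clo: "U \<in> car Q \<Longrightarrow> V \<in> car Q \<Longrightarrow> mul Q U V \<in> car Q"
  using cl_surj by (metis cl_in cl_mul mul_in)

lemma Q_assoc: assumes "U \<in> car Q" "V \<in> car Q" "W \<in> car Q" shows "mul Q (mul Q U V) W = mul Q U (mul Q V W)"
proof -
  obtain u v w where "u \<in> C" "v \<in> C" "w \<in> C" "U = cl u" "V = cl v" "W = cl w" using cl_surj assms by metis
  then show ?thesis by simp
qed

lemma Q_ic: assumes "P \<in> car Q" "R \<in> car Q" "mul Q P P = P" "mul Q R R = R" shows "mul Q P R = mul Q R P"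
proof -
  obtain e f where "idem S e" "idem S f" "P = cl e" "R = cl f" using Q_idem_lift assms by metis
  then show ?thesis using idem_comm idem_in by simp
qed

lemma Q_isg: "isg Q"
proof -
  have 1: "zer Q \<in> car Q" using Q_zer by simp
  have 2: "\<forall>X\<in>car Q. \<forall>Y\<in>car Q. mul Q X Y \<in> car Q" using Q_clo by blast
  have 3: "\<forall>X\<in>car Q. \<forall>Y\<in>car Q. \<forall>W\<in>car Q. mul Q (mul Q X Y) W = mul Q X (mul Q Y W)" using Q_assoc by blast
  have 4: "\<forall>X\<in>car Q. mul Q (zer Q) X = zer Q \<and> mul Q X (zer Q) = zer Q"
  proof
    fix X assume X: "X \<in> car Q"
    obtain a where a: "a \<in> C" "X = cl a" using cl_surj X by metis
    show "mul Q (zer Q) X = zer Q \<and> mul Q X (zer Q) = zer Q" using a Q_zer by simp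
  qed
  have 5: "\<forall>X\<in>car Q. \<exists>!Y. Y \<in> car Q \<and> mul Q (mul Q X Y) X = X \<and> mul Q (mul Q Y X) Y = Y"
  proof
    fix X assume X: "X \<in> car Q"
    obtain a where a: "a \<in> C" "X = cl a" using cl_surj X by metis
    show "\<exists>!Y. Y \<in> car Q \<and> mul Q (mul Q X Y) X = X \<and> mul Q (mul Q Y X) Y = Y"
    proof
      show "cl (iv a) \<in> car Q \<and> mul Q (mul Q X (cl (iv a))) X = X \<and> mul Q (mul Q (cl (iv a)) X) (cl (iv a)) = cl (iv a)"
        using a by simp
      fix Y assume h: "Y \<in> car Q \<and> mul Q (mul Q X Y) X = X \<and> mul Q (mul Q Y X) Y = Y"
      have i: "cl (iv a) \<in> car Q" "mul Q (mul Q X (cl (iv a))) X = X" "mul Q (mul Q (cl (iv a)) X) (cl (iv a)) = cl (iv a)"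
        using a by simp_all
      show "Y = cl (iv a)"
        using uniq_inv_generic[of "car Q" "mul Q", OF Q_clo Q_assoc Q_ic X _ i(1) _ _ i(2,3)] h by blast
    qed
  qed
  show ?thesis unfolding isg_def inverse_semigroup_def using 1 2 3 4 5 by blast
qed

lemma Q_C: "inverse_semigroup Q" using Q_isg isg_def by blast

lemma cl_hom: "hom S Q cl" unfolding hom_def using Q_zer by simp

lemma isgS: "isg S" by (rule isg_axioms)

lemma cl_inv: "a \<in> C \<Longrightarrow> cl (iv a) = inv Q (cl a)" using hom_inv[OF isgS Q_isg cl_hom] by blast
lemma cl_dom: "a \<in> C \<Longrightarrow> cl (dom S a) = dom Q (cl a)" using hom_dom[OF isgS Q_isg cl_hom] by blast
lemma cl_leq: "leq S a b \<Longrightarrow> leq Q (cl a) (cl b)" using hom_leq[OF isgS Q_isg cl_hom] by blast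
lemma cl_compat: "compat S a b \<Longrightarrow> compat Q (cl a) (cl b)" using hom_compat[OF isgS Q_isg cl_hom] by blast
lemma cl_idem: "idem S e \<Longrightarrow> idem Q (cl e)" using hom_idem[OF cl_hom] by blast

lemma cl_leq_iff: assumes "a \<in> C" "w \<in> C" shows "leq Q (cl a) (cl w) \<longleftrightarrow> (a, w \<cdot> dom S a) \<in> E"
proof -
  have "leq Q (cl a) (cl w) \<longleftrightarrow> cl a = mul Q (cl w) (dom Q (cl a))" unfolding leq_def using assms by simp
  also have "\<dots> \<longleftrightarrow> cl a = cl (w \<cdot> dom S a)" using cl_dom[OF assms(1), symmetric] assms by simp
  also have "\<dots> \<longleftrightarrow> (a, w \<cdot> dom S a) \<in> E" using cl_eq assms by simp
  finally show ?thesis .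
qed

lemma cl_join: assumes "compat S a b" shows "is_lub_in Q (car Q) {cl a, cl b} (cl (join S a b))"
proof (rule isg.lubI[OF Q_isg])
  have C: "a \<in> C" "b \<in> C" using assms compat_C by blast+
  show "cl (join S a b) \<in> car Q" using assms by simp
  show "\<And>x. x \<in> {cl a, cl b} \<Longrightarrow> leq Q x (cl (join S a b))" using cl_leq join_ub1 join_ub2 assms by blast
  fix Y assume Y: "Y \<in> car Q" and ub: "\<And>x. x \<in> {cl a, cl b} \<Longrightarrow> leq Q x Y"
  obtain w where w: "w \<in> C" "Y = cl w" using cl_surj Y by blast
  have 1: "(a, w \<cdot> dom S a) \<in> E" using cl_leq_iff ub w C by blast
  have 2: "(b, w \<cdot> dom S b) \<in> E" using cl_leq_iff ub w C by blast
  have cw: "compat S (w \<cdot> dom S a) (w \<cdot> dom S b)"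
    using compat_below[OF leq_right[OF w(1) dom_idem[OF C(1)]] leq_right[OF w(1) dom_idem[OF C(2)]]] .
  have "(join S a b, join S (w \<cdot> dom S a) (w \<cdot> dom S b)) \<in> E" using eps_join[OF assms cw 1 2] .
  moreover have "join S (w \<cdot> dom S a) (w \<cdot> dom S b) = w \<cdot> dom S (join S a b)"
    using dist_l[of "dom S a" "dom S b" w] idem_compat dom_join assms w C by simp
  ultimately show "leq Q (cl (join S a b)) Y" using cl_leq_iff w assms by simp
qed

lemma Q_join_eq: "compat S a b \<Longrightarrow> join Q (cl a) (cl b) = cl (join S a b)"
  using isg.join_eq[OF Q_isg] cl_join by blast

end


context bq begin

lemma lift_compat: assumes a: "a \<in> C" and b: "b \<in> C" and cq: "compat Q (cl a) (cl b)"
  shows "\<exists>b'. compat S a b' \<and> cl b' = cl b"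
proof -
  define da where "da = dom S a"
  define db where "db = dom S b"
  define ra where "ra = ran S a"
  define rb where "rb = ran S b"
  have I: "idem S da" "idem S db" "idem S ra" "idem S rb" using a b da_def db_def ra_def rb_def by simp_all
  have IC: "da \<in> C" "db \<in> C" "ra \<in> C" "rb \<in> C" using I idem_in by blast+
  define p where "p = dif db da"
  define q where "q = dif rb ra"
  have pq: "idem S p" "idem S q" using I p_def q_def by simp_all
  have pqC: "p \<in> C" "q \<in> C" using pq idem_in by blast+
  define b2 where "b2 = q \<cdot> (b \<cdot> p)"
  have b2C: "b2 \<in> C" using b2_def pqC b by simp
  have dap: "da \<cdot> p = z" using dif_ortho I p_def by blast
  have raq: "ra \<cdot> q = z" using dif_ortho I q_def by blast
  have ap: "a \<cdot> p = z"
  proof -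
    have "a \<cdot> p = (a \<cdot> da) \<cdot> p" using a da_def by simp
    also have "\<dots> = a \<cdot> (da \<cdot> p)" using a IC pqC by simp
    finally show ?thesis using dap a by simp
  qed
  have iaq: "iv a \<cdot> q = z"
  proof -
    have "iv a \<cdot> q = (iv a \<cdot> ra) \<cdot> q" using a ra_def by (simp add: ran_eq)
    also have "\<dots> = iv a \<cdot> (ra \<cdot> q)" using a IC pqC by simp
    finally show ?thesis using raq a by simp
  qed
  have pdb0: "leq S p db" using dif_props(2)[OF I(2) I(1)] p_def by simp
  have pdb: "db \<cdot> p = p" using idem_leq'[OF pq(1) I(2)] pdb0 by simp
  have ib2: "iv b2 = p \<cdot> (iv b \<cdot> q)" using b2_def pq pqC b by simp
  have c1: "compat S (a \<cdot> db) b2"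
  proof (rule compat_orth)
    show "a \<cdot> db \<in> C" "b2 \<in> C" using a IC b2C by simp_all
    have "iv (a \<cdot> db) \<cdot> b2 = db \<cdot> ((iv a \<cdot> q) \<cdot> (b \<cdot> p))" using a IC I b2_def pqC b by simp
    then show "iv (a \<cdot> db) \<cdot> b2 = z" using iaq IC b pqC by simp
    have "a \<cdot> db \<cdot> iv b2 = (a \<cdot> (db \<cdot> p)) \<cdot> (iv b \<cdot> q)" using ib2 a IC pqC b by simp
    then show "a \<cdot> db \<cdot> iv b2 = z" using pdb ap b pqC by simp
  qed
  have c2: "compat S a b2"
  proof (rule compat_orth)
    show "a \<in> C" "b2 \<in> C" using a b2C by simp_all
    have "iv a \<cdot> b2 = (iv a \<cdot> q) \<cdot> (b \<cdot> p)" using a b2_def pqC b by simp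
    then show "iv a \<cdot> b2 = z" using iaq b pqC by simp
    have "a \<cdot> iv b2 = (a \<cdot> p) \<cdot> (iv b \<cdot> q)" using ib2 a pqC b by simp
    then show "a \<cdot> iv b2 = z" using ap b pqC by simp
  qed
  have c3: "compat S a (a \<cdot> db)" using compat_below[OF leq_refl[OF a] leq_right[OF a I(2)]] .
  define b' where "b' = join S (a \<cdot> db) b2"
  have ab': "compat S a b'" using compat_join[OF c3 c2 c1] b'_def by simp
  have cbd: "compat S (b \<cdot> da) (b \<cdot> p)" using compat_below[OF leq_right[OF b I(1)] leq_right[OF b pq(1)]] .
  have bdec: "b = join S (b \<cdot> da) (b \<cdot> p)"
  proof -
    have j: "join S (db \<cdot> da) p = db" using dif_props(4)[of db da] I p_def by simp
    have cc: "compat S (db \<cdot> da) p" using idem_compat I pq by simp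
    have "b = b \<cdot> db" using b db_def by simp
    also have "\<dots> = b \<cdot> join S (db \<cdot> da) p" using j by simp
    also have "\<dots> = join S (b \<cdot> (db \<cdot> da)) (b \<cdot> p)" using dist_l[OF cc b] .
    also have "b \<cdot> (db \<cdot> da) = b \<cdot> da" using b IC db_def by (metis a_dom assoc dom_in)
    finally show ?thesis .
  qed
  have bpC: "b \<cdot> p \<in> C" using b pqC by simp
  have cbp: "compat S (ra \<cdot> (b \<cdot> p)) (q \<cdot> (b \<cdot> p))"
    using compat_below[OF leq_left[OF bpC I(3)] leq_left[OF bpC pq(2)]] .
  have bpdec: "b \<cdot> p = join S (ra \<cdot> (b \<cdot> p)) b2"
  proof -
    have j: "join S (rb \<cdot> ra) q = rb" using dif_props(4)[of rb ra] I q_def by simp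
    have cc: "compat S (rb \<cdot> ra) q" using idem_compat I pq by simp
    have "b \<cdot> p = rb \<cdot> (b \<cdot> p)" using b pqC rb_def by simp
    also have "\<dots> = join S (rb \<cdot> ra) q \<cdot> (b \<cdot> p)" using j by simp
    also have "\<dots> = join S (rb \<cdot> ra \<cdot> (b \<cdot> p)) (q \<cdot> (b \<cdot> p))" using dist_r[OF cc bpC] .
    also have "rb \<cdot> ra \<cdot> (b \<cdot> p) = ra \<cdot> (b \<cdot> p)"
    proof -
      have "rb \<cdot> ra \<cdot> (b \<cdot> p) = ra \<cdot> rb \<cdot> (b \<cdot> p)" using idem_comm I by simp
      also have "\<dots> = ra \<cdot> (rb \<cdot> (b \<cdot> p))" using IC bpC by simp
      also have "\<dots> = ra \<cdot> (b \<cdot> p)" using b pqC rb_def by simp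
      finally show ?thesis .
    qed
    finally show ?thesis using b2_def by simp
  qed
  have u: "(iv a \<cdot> b, iv b \<cdot> a) \<in> E"
  proof -
    have "idem Q (mul Q (inv Q (cl a)) (cl b))" using cq unfolding compat_def by blast
    then have i: "idem Q (cl (iv a \<cdot> b))" using cl_inv[OF a, symmetric] a b by simp
    have "cl (iv (iv a \<cdot> b)) = inv Q (cl (iv a \<cdot> b))" using cl_inv[of "iv a \<cdot> b"] a b by simp
    also have "\<dots> = cl (iv a \<cdot> b)" using isg.inv_idem[OF Q_isg i] .
    finally show ?thesis using cl_eq a b eps_sym by simp
  qed
  have z1: "cl (ra \<cdot> (b \<cdot> p)) = cl z"
  proof -
    have "(a \<cdot> ((iv a \<cdot> b) \<cdot> p), a \<cdot> ((iv b \<cdot> a) \<cdot> p)) \<in> E"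
      using eps_mul_l[OF eps_mul_r[OF u] a] pqC by simp
    moreover have "a \<cdot> ((iv b \<cdot> a) \<cdot> p) = z" using ap a b pqC by simp
    moreover have "a \<cdot> ((iv a \<cdot> b) \<cdot> p) = ra \<cdot> (b \<cdot> p)" using a b pqC ra_def by (simp add: ran_eq)
    ultimately have "(ra \<cdot> (b \<cdot> p), z) \<in> E" by simp
    then show ?thesis using cl_eq[OF mul_in[OF IC(3) mul_in[OF b pqC(1)]] zer_in] by simp
  qed
  have z2: "cl (b \<cdot> da) = cl (a \<cdot> db)"
  proof -
    have "mul Q (cl a) (dom Q (cl b)) = mul Q (cl b) (dom Q (cl a))" using isg.compat_dom[OF Q_isg cq] .
    then show ?thesis using cl_dom[OF a, symmetric] cl_dom[OF b, symmetric] a b da_def db_def by simp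
  qed
  have L1: "is_lub_in Q (car Q) {cl (b \<cdot> da), cl (b \<cdot> p)} (cl b)" using cl_join[OF cbd] bdec by simp
  have L2: "is_lub_in Q (car Q) {cl z, cl b2} (cl (b \<cdot> p))" using cl_join[OF cbp] bpdec[symmetric] z1 b2_def by simp
  have L3: "is_lub_in Q (car Q) {cl z, cl b2} (cl b2)" using isg.lub_zer[OF Q_isg] Q_zer b2C by simp
  have "cl (b \<cdot> p) = cl b2" using isg.lub_unique[OF Q_isg L2 L3] .
  then have L4: "is_lub_in Q (car Q) {cl (a \<cdot> db), cl b2} (cl b)" using L1 z2 by simp
  have L5: "is_lub_in Q (car Q) {cl (a \<cdot> db), cl b2} (cl b')" using cl_join[OF c1] b'_def by simp
  have "cl b' = cl b" using isg.lub_unique[OF Q_isg L5 L4] .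
  then show ?thesis using ab' by blast
qed

lemma Q_dist: "distributive_isg Q"
  unfolding distributive_isg_def
proof (intro conjI ballI impI)
  show "inverse_semigroup Q" using Q_C .
  fix X Y assume X: "X \<in> car Q" and Y: "Y \<in> car Q" and c: "compat Q X Y"
  obtain a b where ab: "a \<in> C" "b \<in> C" "X = cl a" "Y = cl b" using cl_surj X Y by metis
  obtain b' where b': "compat S a b'" "cl b' = cl b" using lift_compat ab c by blast
  have L: "is_lub_in Q (car Q) {X, Y} (cl (join S a b'))" using cl_join[OF b'(1)] ab b' by simp
  then show "\<exists>x. is_lub_in Q (car Q) {X, Y} x" by blast
  have J: "join Q X Y = cl (join S a b')" using isg.join_eq[OF Q_isg L] .
  have b'C: "b' \<in> C" using b' compat_C by blast
  fix W assume W: "W \<in> car Q"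
  obtain s where s: "s \<in> C" "W = cl s" using cl_surj W by blast
  have "mul Q W (join Q X Y) = cl (s \<cdot> join S a b')" using J s b' by simp
  also have "\<dots> = cl (join S (s \<cdot> a) (s \<cdot> b'))" using dist_l b' s by simp
  also have "\<dots> = join Q (cl (s \<cdot> a)) (cl (s \<cdot> b'))" using Q_join_eq compat_mul_l b' s by simp
  also have "\<dots> = join Q (mul Q W X) (mul Q W Y)" using s ab b'(2)[symmetric] b'C by simp
  finally show "mul Q W (join Q X Y) = join Q (mul Q W X) (mul Q W Y)" .
  have "mul Q (join Q X Y) W = cl (join S a b' \<cdot> s)" using J s b' by simp
  also have "\<dots> = cl (join S (a \<cdot> s) (b' \<cdot> s))" using dist_r b' s by simp
  also have "\<dots> = join Q (cl (a \<cdot> s)) (cl (b' \<cdot> s))" using Q_join_eq compat_mul_r b' s by simp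
  also have "\<dots> = join Q (mul Q X W) (mul Q Y W)" using s ab b'(2)[symmetric] b'C by simp
  finally show "mul Q (join Q X Y) W = join Q (mul Q X W) (mul Q Y W)" .
qed

lemma Q_disg: "disg Q" unfolding disg_def disg_axioms_def using Q_isg Q_dist by blast

lemma Q_idem_lift': assumes "idem Q P" shows "\<exists>e. idem S e \<and> P = cl e"
  using Q_idem_lift assms unfolding idem_def by blast

lemma Q_gb: "gen_boolean_idem Q"
  unfolding gen_boolean_idem_def
proof (intro conjI ballI impI)
  fix e f assume e: "e \<in> Idem Q" and f: "f \<in> Idem Q"
  have ei: "idem Q e" "idem Q f" using e f by (simp_all add: Idem_def)
  show "\<exists>x. is_lub_in Q (Idem Q) {e, f} x" using disg.lub_Idem[OF Q_disg ei] by blast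
  show "\<exists>x. is_glb_in Q (Idem Q) {e, f} x" using isg.glb_idem[OF Q_isg ei] by blast
  fix g assume g: "g \<in> Idem Q"
  have gi: "idem Q g" using g by (simp add: Idem_def)
  show "Emeet Q e (Ejoin Q f g) = Ejoin Q (Emeet Q e f) (Emeet Q e g)" using disg.Edist[OF Q_disg ei(1) ei(2) gi] .
next
  show "zer Q \<in> Idem Q" using isg.idem_zer[OF Q_isg] by (simp add: Idem_def)
next
  fix e assume "e \<in> Idem Q"
  then show "leq Q (zer Q) e" using isg.zer_leq[OF Q_isg] isg.idem_in[OF Q_isg] by (simp add: Idem_def)
next
  fix E1 F1 assume E1: "E1 \<in> Idem Q" and F1: "F1 \<in> Idem Q" and le: "leq Q F1 E1"
  have ei: "idem Q E1" "idem Q F1" using E1 F1 by (simp_all add: Idem_def)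
  obtain e where e: "idem S e" "E1 = cl e" using Q_idem_lift' ei by blast
  obtain f0 where f0: "idem S f0" "F1 = cl f0" using Q_idem_lift' ei by blast
  define f where "f = e \<cdot> f0"
  have fi: "idem S f" using e f0 f_def by simp
  have eC: "e \<in> C" "f0 \<in> C" "f \<in> C" using e f0 fi idem_in by blast+
  have "F1 = mul Q E1 F1" using isg.idem_leq'[OF Q_isg ei(2) ei(1)] le by blast
  then have F1f: "F1 = cl f" using e f0 f_def eC by simp
  define g where "g = dif e f"
  have gi: "idem S g" using g_def e fi by simp
  have gC: "g \<in> C" using gi idem_in by blast
  show "\<exists>G\<in>Idem Q. leq Q G E1 \<and> Emeet Q F1 G = zer Q \<and> Ejoin Q F1 G = E1"
  proof (intro bexI conjI)
    show "cl g \<in> Idem Q" using cl_idem gi by (simp add: Idem_def)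
    show "leq Q (cl g) E1" using cl_leq dif_props e fi g_def by simp
    have "Emeet Q F1 (cl g) = mul Q (cl f) (cl g)" using isg.Emeet_eq[OF Q_isg] ei F1f cl_idem gi by simp
    also have "\<dots> = cl (f \<cdot> g)" using eC gC by simp
    also have "f \<cdot> g = z" using dif_ortho e fi g_def by simp
    finally show "Emeet Q F1 (cl g) = zer Q" using Q_zer by simp
    have "Ejoin Q F1 (cl g) = join Q (cl f) (cl g)" using disg.Ejoin_join[OF Q_disg] ei F1f cl_idem gi by simp
    also have "\<dots> = cl (join S f g)" using Q_join_eq idem_compat fi gi by simp
    also have "join S f g = e"
    proof -
      have "e \<cdot> f = f" using f_def e eC by simp
      then show ?thesis using dif_props(4)[of e f] e fi g_def by simp
    qed
    finally show "Ejoin Q F1 (cl g) = E1" using e by simp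
  qed
qed

lemma Q_bool: "boolean_isg Q" unfolding boolean_isg_def using Q_dist Q_gb by blast

lemma cl_bmorph: "bmorphism S Q cl"
  unfolding bmorphism_def using cl_hom Q_join_eq by blast

end


context isg begin
lemma isg_self: "isg S" by (rule isg_axioms)
end

context bisg begin
lemma ecompl_eq: assumes "idem S e" "idem S f" "leq S f e" "idem S g" "leq S g e" "f \<cdot> g = z" "join S f g = e"
  shows "ecompl S e f = g"
  using ecompl_props[OF assms(1-3)] ecompl_uniq[OF assms(1,2) _ assms(4)] assms by blast
end

lemma bmorph_bdiff:
  assumes B: "bisg B" and T: "bisg T" and h: "bmorphism B T h" and yx: "leq B y x"
  shows "h (bdiff B x y) = bdiff T (h x) (h y)"
proof -
  interpret b: bisg B by fact
  interpret t: bisg T by fact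
  have hh: "hom B T h" using h bmorphism_def by blast
  have C: "x \<in> car B" "y \<in> car B" using yx b.leq_C1 b.leq_C2 by blast+
  define e where "e = dom B x"
  define f where "f = dom B y"
  define g where "g = ecompl B e f"
  have ei: "idem B e" "idem B f" using C e_def f_def by simp_all
  have fe: "leq B f e" using b.dom_mono yx e_def f_def by blast
  have gp: "idem B g" "leq B g e" "mul B f g = zer B" "join B f g = e"
    using b.ecompl_props[OF ei fe] g_def by blast+
  have he: "h e = dom T (h x)" "h f = dom T (h y)" using hom_dom[OF b.isg_self t.isg_self hh] C e_def f_def by blast+
  have "ecompl T (h e) (h f) = h g"
  proof (rule t.ecompl_eq)
    show "idem T (h e)" "idem T (h f)" "idem T (h g)" using hom_idem[OF hh] ei gp by blast+
    show "leq T (h f) (h e)" "leq T (h g) (h e)" using hom_leq[OF b.isg_self t.isg_self hh] fe gp by blast+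
    have fgC: "f \<in> car B" "g \<in> car B" using b.idem_in ei gp by blast+
    have "mul T (h f) (h g) = h (mul B f g)" using hom_mul[OF hh fgC] by simp
    then show "mul T (h f) (h g) = zer T" using hom_zer[OF hh] gp by simp
    have "compat B f g" using b.idem_compat ei gp by blast
    moreover have "\<forall>a\<in>car B. \<forall>b\<in>car B. compat B a b \<longrightarrow> h (join B a b) = join T (h a) (h b)"
      using h unfolding bmorphism_def by blast
    ultimately have "h (join B f g) = join T (h f) (h g)" using fgC by blast
    then show "join T (h f) (h g) = h e" using gp by simp
  qed
  moreover have "h (bdiff B x y) = mul T (h x) (h g)"
  proof -
    have "bdiff B x y = mul B x g" unfolding bdiff_def g_def e_def f_def by simp
    moreover have "g \<in> car B" using b.idem_in gp by blast
    ultimately show ?thesis using hom_mul[OF hh C(1)] by simp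
  qed
  ultimately show ?thesis unfolding bdiff_def using he by simp
qed

lemma boolean_bisg: "boolean_isg B \<Longrightarrow> bisg B"
  unfolding bisg_def bisg_axioms_def disg_def disg_axioms_def isg_def boolean_isg_def distributive_isg_def by blast

lemma ck_props:
  assumes S: "isg S" and B: "bisg B" and h: "hom S B \<beta>"
  shows "additive_ideal B (ck_ideal S B \<beta>)" "ck_gens S B \<beta> \<subseteq> ck_ideal S B \<beta>" "zer B \<in> ck_ideal S B \<beta>"
proof -
  interpret s: isg S by fact
  interpret b: bisg B by fact
  have CB: "additive_ideal B (car B)" unfolding additive_ideal_def using b.join_in by simp
  have GC: "ck_gens S B \<beta> \<subseteq> car B"
  proof
    fix x assume "x \<in> ck_gens S B \<beta>"
    then obtain a A where aA: "x = bdiff B (\<beta> a) (join_set B (\<beta> ` A))" "a \<in> car S" "is_cover S a A"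
      unfolding ck_gens_def by blast
    have fin: "finite (\<beta> ` A)" using aA unfolding is_cover_def by blast
    have "A \<subseteq> down S a" using aA unfolding is_cover_def by blast
    then have sub: "\<beta> ` A \<subseteq> down B (\<beta> a)" unfolding down_def using hom_leq[OF s.isg_self b.isg_self h] hom_in[OF h] by blast
    obtain j where j: "is_lub_in B (car B) (\<beta> ` A) j" "leq B j (\<beta> a)"
      using b.fin_lub[OF fin sub] hom_in[OF h aA(2)] by blast
    have "join_set B (\<beta> ` A) = j" using b.join_set_eq j(1) by blast
    then show "x \<in> car B" using aA(1) b.bdiff_in j(2) by simp
  qed
  define F where "F = {I. additive_ideal B I \<and> ck_gens S B \<beta> \<subseteq> I}"
  have ckF: "ck_ideal S B \<beta> = \<Inter>F" unfolding ck_ideal_def F_def by simp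
  have CF: "car B \<in> F" using CB GC F_def by blast
  have FA: "\<And>I. I \<in> F \<Longrightarrow> additive_ideal B I" using F_def by blast
  have "additive_ideal B (\<Inter>F)"
    unfolding additive_ideal_def
  proof (intro conjI ballI impI)
    show "\<Inter>F \<subseteq> car B" using CF by blast
  next
    fix s a assume "s \<in> car B" "a \<in> \<Inter>F"
    then show "mul B s a \<in> \<Inter>F" "mul B a s \<in> \<Inter>F"
      using FA unfolding additive_ideal_def by blast+
  next
    fix a b assume "a \<in> \<Inter>F" "b \<in> \<Inter>F" "compat B a b"
    then show "join B a b \<in> \<Inter>F"
      using FA unfolding additive_ideal_def by blast
  qed
  then show AI: "additive_ideal B (ck_ideal S B \<beta>)" using ckF by simp
  show G: "ck_gens S B \<beta> \<subseteq> ck_ideal S B \<beta>" unfolding ck_ideal_def by blast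
  have cov: "is_cover S (zer S) {}" unfolding is_cover_def down_def using s.leq_zer by auto
  define g0 where "g0 = bdiff B (\<beta> (zer S)) (join_set B (\<beta> ` {}))"
  have "g0 \<in> ck_gens S B \<beta>" unfolding ck_gens_def g0_def using cov s.zer_in by blast
  then have g0: "g0 \<in> ck_ideal S B \<beta>" using G by blast
  have g0C: "g0 \<in> car B" using AI g0 unfolding additive_ideal_def by blast
  have "mul B (zer B) g0 \<in> ck_ideal S B \<beta>" using AI g0 unfolding additive_ideal_def by simp
  then show "zer B \<in> ck_ideal S B \<beta>" using g0C by simp
qed


theorem theorem1p3:
  fixes S :: "'a isg" and B :: "'b isg" and \<beta> :: "'a \<Rightarrow> 'b"
  assumes "inverse_semigroup S"
    and "booleanization S B \<beta> TYPE('c)"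
  shows "cover_to_join S (exel S B \<beta>) (tau S B \<beta>)
    \<and> (\<forall>(T :: 'c isg) \<theta>. cover_to_join S T \<theta> \<longrightarrow>
         (\<exists>\<theta>'. bmorphism (exel S B \<beta>) T \<theta>'
              \<and> (\<forall>s\<in>car S. \<theta>' (tau S B \<beta> s) = \<theta> s)
              \<and> (\<forall>\<theta>''. bmorphism (exel S B \<beta>) T \<theta>''
                      \<and> (\<forall>s\<in>car S. \<theta>'' (tau S B \<beta> s) = \<theta> s)
                      \<longrightarrow> (\<forall>x\<in>car (exel S B \<beta>). \<theta>'' x = \<theta>' x))))"
proof -
  define I where "I = ck_ideal S B \<beta>"
  have isgS: "isg S" using assms(1) isg_def by blast
  have BB: "boolean_isg B" and hB: "hom S B \<beta>"
    and univ: "\<forall>(T :: 'c isg) \<theta>. boolean_isg T \<and> hom S T \<theta> \<longrightarrow>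
        (\<exists>\<theta>'. bmorphism B T \<theta>' \<and> (\<forall>s\<in>car S. \<theta>' (\<beta> s) = \<theta> s)
           \<and> (\<forall>\<theta>''. bmorphism B T \<theta>'' \<and> (\<forall>s\<in>car S. \<theta>'' (\<beta> s) = \<theta> s)
                 \<longrightarrow> (\<forall>x\<in>car B. \<theta>'' x = \<theta>' x)))"
    using assms(2) unfolding booleanization_def by blast+
  have bisgB: "bisg B" using boolean_bisg BB by blast
  note ck = ck_props[OF isgS bisgB hB, folded I_def]
  interpret s: isg S by fact
  interpret b: bq B I unfolding bq_def bq_axioms_def using bisgB ck by blast
  have disgB: "disg B" using bisgB unfolding bisg_def by blast
  have exel_eq: "exel S B \<beta> = b.Q" by (simp add: exel_def I_def)
  have tau_eq: "tau S B \<beta> = (\<lambda>s. b.cl (\<beta> s))" by (rule ext) (simp add: tau_def nu_def I_def)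
  have coverj: "\<exists>j. is_lub_in B (car B) (\<beta> ` A) j \<and> leq B j (\<beta> a) \<and> join_set B (\<beta> ` A) = j
      \<and> finite (\<beta> ` A) \<and> \<beta> ` A \<subseteq> down B (\<beta> a) \<and> A \<subseteq> car S"
    if aA: "a \<in> car S" "is_cover S a A" for a A
  proof -
    have fin: "finite (\<beta> ` A)" using aA unfolding is_cover_def by blast
    have Ad: "A \<subseteq> down S a" using aA unfolding is_cover_def by blast
    then have AC: "A \<subseteq> car S" unfolding down_def by blast
    have sub: "\<beta> ` A \<subseteq> down B (\<beta> a)" using Ad unfolding down_def using hom_leq[OF isgS b.isg_self hB] hom_in[OF hB] by blast
    obtain j where j: "is_lub_in B (car B) (\<beta> ` A) j" "leq B j (\<beta> a)"
      using b.fin_lub[OF fin sub] hom_in[OF hB aA(1)] by blast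
    have "join_set B (\<beta> ` A) = j" using b.join_set_eq j(1) by blast
    then show ?thesis using j fin sub AC by blast
  qed
  have part1: "cover_to_join S b.Q (\<lambda>s. b.cl (\<beta> s))"
    unfolding cover_to_join_def
  proof (intro conjI ballI allI impI)
    show "boolean_isg b.Q" using b.Q_bool .
    show "hom S b.Q (\<lambda>s. b.cl (\<beta> s))"
      unfolding hom_def
    proof (intro conjI ballI)
      fix x assume "x \<in> car S" then show "b.cl (\<beta> x) \<in> car b.Q" using hom_in[OF hB] by simp
    next
      fix x y assume "x \<in> car S" "y \<in> car S"
      then show "b.cl (\<beta> (mul S x y)) = mul b.Q (b.cl (\<beta> x)) (b.cl (\<beta> y))"
        using hom_in[OF hB] hom_mul[OF hB] by simp
    next
      show "b.cl (\<beta> (zer S)) = zer b.Q" using hom_zer[OF hB] b.Q_zer by simp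
    qed
    fix a A assume a: "a \<in> car S" and cov: "is_cover S a A"
    obtain j where j: "is_lub_in B (car B) (\<beta> ` A) j" "leq B j (\<beta> a)" "join_set B (\<beta> ` A) = j"
      "finite (\<beta> ` A)" "\<beta> ` A \<subseteq> down B (\<beta> a)" using coverj[OF a cov] by blast
    have "bdiff B (\<beta> a) j \<in> ck_gens S B \<beta>" unfolding ck_gens_def using a cov j(3) by blast
    then have g: "bdiff B (\<beta> a) j \<in> I" using ck(2) by blast
    have jC: "j \<in> car B" using j b.leq_C1 by blast
    have "(\<beta> a, j) \<in> b.E" using b.epsI[OF j(2) b.leq_refl[OF jC] g] b.zI jC by simp
    then have eq: "b.cl (\<beta> a) = b.cl j" using b.cl_eq jC hom_in[OF hB a] by blast
    have "is_lub_in b.Q (car b.Q) (b.cl ` \<beta> ` A) (b.cl (join_set B (\<beta> ` A)))"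
      using fin_lub_pres[OF disgB b.Q_isg, of b.cl, OF b.cl_in _ b.cl_join j(4) j(5) hom_in[OF hB a]] b.Q_zer by simp
    then show "is_lub_in b.Q (car b.Q) ((\<lambda>s. b.cl (\<beta> s)) ` A) (b.cl (\<beta> a))"
      using eq j(3) by (simp add: image_image)
  qed
  have part2: "\<exists>\<theta>'. bmorphism b.Q T \<theta>' \<and> (\<forall>s\<in>car S. \<theta>' (b.cl (\<beta> s)) = \<theta> s)
              \<and> (\<forall>\<theta>''. bmorphism b.Q T \<theta>'' \<and> (\<forall>s\<in>car S. \<theta>'' (b.cl (\<beta> s)) = \<theta> s)
                      \<longrightarrow> (\<forall>x\<in>car b.Q. \<theta>'' x = \<theta>' x))"
    if ctj: "cover_to_join S T \<theta>" for T :: "'c isg" and \<theta>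
  proof -
    have BT: "boolean_isg T" and hT: "hom S T \<theta>"
      and cvT: "\<And>a A. a \<in> car S \<Longrightarrow> is_cover S a A \<Longrightarrow> is_lub_in T (car T) (\<theta> ` A) (\<theta> a)"
      using ctj unfolding cover_to_join_def by blast+
    have bisgT: "bisg T" using boolean_bisg BT by blast
    interpret t: bisg T by fact
    obtain \<theta>1 where th1: "bmorphism B T \<theta>1" "\<forall>s\<in>car S. \<theta>1 (\<beta> s) = \<theta> s"
      and uq: "\<forall>\<theta>''. bmorphism B T \<theta>'' \<and> (\<forall>s\<in>car S. \<theta>'' (\<beta> s) = \<theta> s) \<longrightarrow> (\<forall>x\<in>car B. \<theta>'' x = \<theta>1 x)"
      using univ BT hT by blast
    have h1: "hom B T \<theta>1" using th1 bmorphism_def by blast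
    have j1: "\<And>x y. compat B x y \<Longrightarrow> \<theta>1 (join B x y) = join T (\<theta>1 x) (\<theta>1 y)"
      using th1(1) b.compat_C unfolding bmorphism_def by blast
    define K where "K = {x \<in> car B. \<theta>1 x = zer T}"
    have AK: "additive_ideal B K"
      unfolding additive_ideal_def
    proof (intro conjI ballI impI)
      show "K \<subseteq> car B" using K_def by blast
    next
      fix s a assume s: "s \<in> car B" and a: "a \<in> K"
      have aC: "a \<in> car B" "\<theta>1 a = zer T" using a K_def by blast+
      have "\<theta>1 (mul B s a) = mul T (\<theta>1 s) (zer T)" using hom_mul[OF h1 s aC(1)] aC by simp
      then show "mul B s a \<in> K" using hom_in[OF h1 s] K_def s aC by simp
      have "\<theta>1 (mul B a s) = mul T (zer T) (\<theta>1 s)" using hom_mul[OF h1 aC(1) s] aC by simp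
      then show "mul B a s \<in> K" using hom_in[OF h1 s] K_def s aC by simp
    next
      fix a c assume a: "a \<in> K" and c: "c \<in> K" and ac: "compat B a c"
      have "\<theta>1 (join B a c) = join T (zer T) (zer T)" using j1[OF ac] a c K_def by simp
      then show "join B a c \<in> K" using K_def ac by simp
    qed
    have GK: "ck_gens S B \<beta> \<subseteq> K"
    proof
      fix x assume "x \<in> ck_gens S B \<beta>"
      then obtain a A where aA: "x = bdiff B (\<beta> a) (join_set B (\<beta> ` A))" "a \<in> car S" "is_cover S a A"
        unfolding ck_gens_def by blast
      obtain j where j: "is_lub_in B (car B) (\<beta> ` A) j" "leq B j (\<beta> a)" "join_set B (\<beta> ` A) = j"
        "finite (\<beta> ` A)" "\<beta> ` A \<subseteq> down B (\<beta> a)" "A \<subseteq> car S" using coverj[OF aA(2,3)] by blast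
      have fj: "\<And>x y. compat B x y \<Longrightarrow> is_lub_in T (car T) {\<theta>1 x, \<theta>1 y} (\<theta>1 (join B x y))"
        using j1 t.join_lub hom_compat[OF b.isg_self t.isg_self h1] by simp
      have "is_lub_in T (car T) (\<theta>1 ` \<beta> ` A) (\<theta>1 (join_set B (\<beta> ` A)))"
        using fin_lub_pres[OF disgB t.isg_self, of \<theta>1, OF hom_in[OF h1] hom_zer[OF h1] fj j(4) j(5) hom_in[OF hB aA(2)]] .
      moreover have "\<theta>1 ` \<beta> ` A = \<theta> ` A" using th1(2) j(6) by (force simp: image_image)
      ultimately have "is_lub_in T (car T) (\<theta> ` A) (\<theta>1 j)" using j(3) by simp
      then have "\<theta>1 j = \<theta> a" using t.lub_unique cvT[OF aA(2,3)] by blast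
      then have eqj: "\<theta>1 j = \<theta>1 (\<beta> a)" using th1(2) aA(2) by simp
      have "\<theta>1 x = bdiff T (\<theta>1 (\<beta> a)) (\<theta>1 j)" using bmorph_bdiff[OF bisgB bisgT th1(1) j(2)] aA(1) j(3) by simp
      also have "\<dots> = zer T" using eqj hom_in[OF h1 hom_in[OF hB aA(2)]] by simp
      finally show "x \<in> K" using K_def aA(1) j b.bdiff_in by simp
    qed
    have IK: "I \<subseteq> K" unfolding I_def ck_ideal_def using AK GK by blast
    have half: "\<theta>1 x = \<theta>1 c" if "leq B c x" "bdiff B x c \<in> I" for x c
    proof -
      have C: "x \<in> car B" "c \<in> car B" using that b.leq_C1 b.leq_C2 by blast+
      have cc: "compat B c (bdiff B x c)" using b.compat_below[OF that(1) b.bdiff_leq[OF that(1)]] .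
      have "\<theta>1 x = \<theta>1 (join B c (bdiff B x c))" using b.bdiff_join[OF that(1)] by simp
      also have "\<dots> = join T (\<theta>1 c) (\<theta>1 (bdiff B x c))" using j1[OF cc] .
      also have "\<theta>1 (bdiff B x c) = zer T" using IK that K_def by blast
      finally show ?thesis using hom_in[OF h1 C(2)] by simp
    qed
    have resp: "\<theta>1 x = \<theta>1 y" if xy: "(x, y) \<in> b.E" for x y
    proof -
      obtain c where c: "leq B c x" "leq B c y" "bdiff B x c \<in> I" "bdiff B y c \<in> I" using b.epsE[OF xy] by blast
      show ?thesis using half[OF c(1,3)] half[OF c(2,4)] by simp
    qed
    define \<theta>' where "\<theta>' X = \<theta>1 (SOME x. x \<in> X)" for X
    have tcl: "\<theta>' (b.cl a) = \<theta>1 a" if "a \<in> car B" for a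
      using resp b.some_rep[OF that] \<theta>'_def by simp
    have hom': "hom b.Q T \<theta>'"
      unfolding hom_def
    proof (intro conjI ballI)
      fix X assume "X \<in> car b.Q"
      then obtain a where "a \<in> car B" "X = b.cl a" using b.cl_surj by blast
      then show "\<theta>' X \<in> car T" using tcl hom_in[OF h1] by simp
    next
      fix X Y assume "X \<in> car b.Q" "Y \<in> car b.Q"
      then obtain a c where "a \<in> car B" "X = b.cl a" "c \<in> car B" "Y = b.cl c" using b.cl_surj by metis
      then show "\<theta>' (mul b.Q X Y) = mul T (\<theta>' X) (\<theta>' Y)" using tcl hom_mul[OF h1] by simp
    next
      show "\<theta>' (zer b.Q) = zer T" using tcl b.Q_zer hom_zer[OF h1] by simp
    qed
    have bm': "bmorphism b.Q T \<theta>'"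
      unfolding bmorphism_def
    proof (intro conjI ballI impI)
      show "hom b.Q T \<theta>'" by fact
      fix X Y assume X: "X \<in> car b.Q" and Y: "Y \<in> car b.Q" and cXY: "compat b.Q X Y"
      obtain a c where ac: "a \<in> car B" "X = b.cl a" "c \<in> car B" "Y = b.cl c" using b.cl_surj X Y by metis
      obtain c' where c': "compat B a c'" "b.cl c' = b.cl c" using b.lift_compat ac cXY by blast
      have c'C: "c' \<in> car B" using c' b.compat_C by blast
      have "join b.Q X Y = b.cl (join B a c')" using b.Q_join_eq[OF c'(1)] ac c' by simp
      then have "\<theta>' (join b.Q X Y) = \<theta>1 (join B a c')" using tcl c' by simp
      also have "\<dots> = join T (\<theta>1 a) (\<theta>1 c')" using j1[OF c'(1)] .
      also have "\<dots> = join T (\<theta>' X) (\<theta>' Y)" using tcl ac c'C c'(2)[symmetric] by simp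
      finally show "\<theta>' (join b.Q X Y) = join T (\<theta>' X) (\<theta>' Y)" .
    qed
    have agree: "\<forall>s\<in>car S. \<theta>' (b.cl (\<beta> s)) = \<theta> s" using tcl th1(2) hom_in[OF hB] by simp
    have uniq: "\<forall>x\<in>car b.Q. \<theta>'' x = \<theta>' x"
      if h'': "bmorphism b.Q T \<theta>''" "\<forall>s\<in>car S. \<theta>'' (b.cl (\<beta> s)) = \<theta> s" for \<theta>''
    proof
      fix X assume X: "X \<in> car b.Q"
      obtain x where x: "x \<in> car B" "X = b.cl x" using b.cl_surj X by blast
      have hh'': "hom b.Q T \<theta>''" using h'' bmorphism_def by blast
      have bmc: "bmorphism B T (\<lambda>x. \<theta>'' (b.cl x))"
        unfolding bmorphism_def hom_def
      proof (intro conjI ballI impI)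
        fix a assume "a \<in> car B" then show "\<theta>'' (b.cl a) \<in> car T" using hom_in[OF hh''] by simp
      next
        fix a c assume "a \<in> car B" "c \<in> car B"
        then show "\<theta>'' (b.cl (mul B a c)) = mul T (\<theta>'' (b.cl a)) (\<theta>'' (b.cl c))"
          using hom_mul[OF hh''] b.cl_mul by (metis b.cl_in)
      next
        show "\<theta>'' (b.cl (zer B)) = zer T" using hom_zer[OF hh''] b.Q_zer by simp
      next
        fix a c assume "a \<in> car B" "c \<in> car B" "compat B a c"
        then show "\<theta>'' (b.cl (join B a c)) = join T (\<theta>'' (b.cl a)) (\<theta>'' (b.cl c))"
          using h'' b.Q_join_eq b.cl_compat b.cl_in unfolding bmorphism_def by metis
      qed
      have "\<theta>'' (b.cl x) = \<theta>1 x" using uq bmc h''(2) x by blast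
      then show "\<theta>'' X = \<theta>' X" using tcl x by simp
    qed
    show ?thesis using bm' agree uniq by blast
  qed
  show ?thesis using part1 part2 exel_eq tau_eq by simp
qed


end
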